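(* Let $G$ be a $K_{3,3}$-minor free graph of order $n\geq 11$ with $\Delta(G)\leq n-4$. Then $q(G)\leq n+2$.
   Context: All graphs are finite, simple and undirected. $q(G)$ is the largest eigenvalue of the signless Laplacian matrix $Q(G)=D(G)+A(G)$. $\Delta(G)$ is the maximum degree of $G$. A graph $H$ is a minor of $G$ if $H$ can be obtained from $G$ by deleting edges, contracting edges, or deleting vertices; $G$ is $H$-minor free if it has no minor isomorphic to $H$. $K_{3,3}$ is the complete bipartite graph with both parts of size 3. *)

theory Defs
  imports Complex_Main
begin

definition simple_graph :: "'a set \<Rightarrow> 'a set set \<Rightarrow> bool" where
  "simple_graph V E \<longleftrightarrow> finite V \<and> (\<forall>e\<in>E. e \<subseteq> V \<and> card e = 2)"

definition adj :: "'a set set \<Rightarrow> 'a \<Rightarrow> 'a \<Rightarrow> bool" where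
  "adj E u v \<longleftrightarrow> {u, v} \<in> E"

definition degree :: "'a set set \<Rightarrow> 'a \<Rightarrow> nat" where
  "degree E v = card {e \<in> E. v \<in> e}"

definition max_degree :: "'a set \<Rightarrow> 'a set set \<Rightarrow> nat" where
  "max_degree V E = Max (degree E ` V)"

text \<open>Eigenvalues of the signless Laplacian Q(G) = D(G) + A(G), viewed as a
  real symmetric matrix indexed by V (all its eigenvalues are real).\<close>

definition signless_laplacian_eigenvalue :: "'a set \<Rightarrow> 'a set set \<Rightarrow> real \<Rightarrow> bool" where
  "signless_laplacian_eigenvalue V E mu \<longleftrightarrow>
     (\<exists>x :: 'a \<Rightarrow> real. (\<exists>v\<in>V. x v \<noteq> 0) \<and>
        (\<forall>v\<in>V. real (degree E v) * x v + (\<Sum>u\<in>{u\<in>V. adj E v u}. x u) = mu * x v))"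

definition q_index :: "'a set \<Rightarrow> 'a set set \<Rightarrow> real" where
  "q_index V E = Max {mu. signless_laplacian_eigenvalue V E mu}"

definition delete_vertex :: "'a \<Rightarrow> 'a set \<times> 'a set set \<Rightarrow> 'a set \<times> 'a set set" where
  "delete_vertex x G = (fst G - {x}, {e \<in> snd G. x \<notin> e})"

definition delete_edge :: "'a set \<Rightarrow> 'a set \<times> 'a set set \<Rightarrow> 'a set \<times> 'a set set" where
  "delete_edge e G = (fst G, snd G - {e})"

definition contract_edge :: "'a \<Rightarrow> 'a \<Rightarrow> 'a set \<times> 'a set set \<Rightarrow> 'a set \<times> 'a set set" where
  "contract_edge u v G =
     (fst G - {v},
      {e'. \<exists>e\<in>snd G. e' = (\<lambda>w. if w = v then u else w) ` e \<and> card e' = 2})"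

inductive minor :: "'a set \<times> 'a set set \<Rightarrow> 'a set \<times> 'a set set \<Rightarrow> bool" where
  refl: "minor G G"
| del_vertex: "minor G H \<Longrightarrow> x \<in> fst H \<Longrightarrow> minor G (delete_vertex x H)"
| del_edge: "minor G H \<Longrightarrow> e \<in> snd H \<Longrightarrow> minor G (delete_edge e H)"
| contract: "minor G H \<Longrightarrow> {u, v} \<in> snd H \<Longrightarrow> u \<noteq> v \<Longrightarrow> minor G (contract_edge u v H)"

definition is_K33 :: "'a set \<times> 'a set set \<Rightarrow> bool" where
  "is_K33 H \<longleftrightarrow> (\<exists>A B. A \<inter> B = {} \<and> card A = 3 \<and> card B = 3 \<and>
       fst H = A \<union> B \<and> snd H = {{a, b} | a b. a \<in> A \<and> b \<in> B})"

definition K33_minor_free :: "'a set \<Rightarrow> 'a set set \<Rightarrow> bool" where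
  "K33_minor_free V E \<longleftrightarrow> \<not> (\<exists>H. minor (V, E) H \<and> is_K33 H)"

end

theory Submission
  imports Defs "Jordan_Normal_Form.Spectral_Radius"
begin


definition nb :: "'a set set \<Rightarrow> 'a \<Rightarrow> 'a set" where
  "nb F x = {y. {x, y} \<in> F}"

definition conn :: "'a set set \<Rightarrow> 'a set \<Rightarrow> bool" where
  "conn F B \<longleftrightarrow> B \<noteq> {} \<and>
     (\<forall>S. S \<subseteq> B \<longrightarrow> S \<noteq> {} \<longrightarrow> S \<noteq> B \<longrightarrow> (\<exists>x\<in>S. \<exists>y\<in>B - S. {x, y} \<in> F))"

definition K33m :: "'a set \<Rightarrow> 'a set set \<Rightarrow> (nat \<Rightarrow> 'a set) \<Rightarrow> bool" where
  "K33m W F B \<longleftrightarrow> (\<forall>i<6. B i \<subseteq> W \<and> conn F (B i)) \<and>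
     (\<forall>i<6. \<forall>j<6. i \<noteq> j \<longrightarrow> B i \<inter> B j = {}) \<and>
     (\<forall>i<3. \<forall>j. 3 \<le> j \<longrightarrow> j < 6 \<longrightarrow> (\<exists>x\<in>B i. \<exists>y\<in>B j. {x, y} \<in> F))"

definition K23m :: "'a set \<Rightarrow> 'a set set \<Rightarrow> (nat \<Rightarrow> 'a set) \<Rightarrow> bool" where
  "K23m W F B \<longleftrightarrow> (\<forall>i<5. B i \<subseteq> W \<and> conn F (B i)) \<and>
     (\<forall>i<5. \<forall>j<5. i \<noteq> j \<longrightarrow> B i \<inter> B j = {}) \<and>
     (\<forall>i<2. \<forall>j. 2 \<le> j \<longrightarrow> j < 5 \<longrightarrow> (\<exists>x\<in>B i. \<exists>y\<in>B j. {x, y} \<in> F))"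

lemma K33m_sub: "K33m W F B \<Longrightarrow> i < 6 \<Longrightarrow> B i \<subseteq> W"
  unfolding K33m_def by blast
lemma K33m_conn: "K33m W F B \<Longrightarrow> i < 6 \<Longrightarrow> conn F (B i)"
  unfolding K33m_def by blast
lemma K33m_disj: "K33m W F B \<Longrightarrow> i < 6 \<Longrightarrow> j < 6 \<Longrightarrow> i \<noteq> j \<Longrightarrow> B i \<inter> B j = {}"
  unfolding K33m_def by blast
lemma K33m_adj: "K33m W F B \<Longrightarrow> i < 3 \<Longrightarrow> 3 \<le> j \<Longrightarrow> j < 6 \<Longrightarrow> \<exists>x\<in>B i. \<exists>y\<in>B j. {x, y} \<in> F"
  unfolding K33m_def by blast
lemma K23m_sub: "K23m W F B \<Longrightarrow> i < 5 \<Longrightarrow> B i \<subseteq> W"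
  unfolding K23m_def by blast
lemma K23m_conn: "K23m W F B \<Longrightarrow> i < 5 \<Longrightarrow> conn F (B i)"
  unfolding K23m_def by blast
lemma K23m_disj: "K23m W F B \<Longrightarrow> i < 5 \<Longrightarrow> j < 5 \<Longrightarrow> i \<noteq> j \<Longrightarrow> B i \<inter> B j = {}"
  unfolding K23m_def by blast
lemma K23m_adj: "K23m W F B \<Longrightarrow> i < 2 \<Longrightarrow> 2 \<le> j \<Longrightarrow> j < 5 \<Longrightarrow> \<exists>x\<in>B i. \<exists>y\<in>B j. {x, y} \<in> F"
  unfolding K23m_def by blast

lemma conn_single[simp]: "conn F {x}"
  unfolding conn_def by auto

lemma conn_mono: "conn F B \<Longrightarrow> F \<subseteq> F' \<Longrightarrow> conn F' B"
  unfolding conn_def by blast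

lemma conn_insert:
  assumes "conn F K" "x \<notin> K" "p \<in> K" "{x, p} \<in> F"
  shows "conn F (insert x K)"
  unfolding conn_def
proof (intro conjI allI impI)
  show "insert x K \<noteq> {}" by simp
  fix S assume S: "S \<subseteq> insert x K" "S \<noteq> {}" "S \<noteq> insert x K"
  show "\<exists>a\<in>S. \<exists>b\<in>insert x K - S. {a, b} \<in> F"
  proof (cases "S - {x} = {}")
    case True
    then have "S = {x}" using S by auto
    then show ?thesis using assms by auto
  next
    case False
    show ?thesis
    proof (cases "S - {x} = K")
      case True
      then have "x \<notin> S" using S assms(2) by auto
      then show ?thesis using True assms by (auto simp: insert_commute)
    next
      case False2: False
      have "S - {x} \<subseteq> K" using S by auto
      then obtain a b where "a \<in> S - {x}" "b \<in> K - (S - {x})" "{a, b} \<in> F"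
        using assms(1) False False2 unfolding conn_def by blast
      then show ?thesis using assms(2) by auto
    qed
  qed
qed

lemma conn_edge: "conn F B \<Longrightarrow> u \<in> B \<Longrightarrow> B \<noteq> {u} \<Longrightarrow> \<exists>w\<in>B. w \<noteq> u \<and> {u, w} \<in> F"
proof -
  assume a: "conn F B" "u \<in> B" "B \<noteq> {u}"
  then have "\<exists>x\<in>{u}. \<exists>y\<in>B - {u}. {x, y} \<in> F" unfolding conn_def by blast
  then show ?thesis by blast
qed

lemma minor_trans: "minor H K \<Longrightarrow> minor G H \<Longrightarrow> minor G K"
proof (induction H K rule: minor.induct)
  case (refl G') then show ?case .
next
  case (del_vertex H' H x) then show ?case by (simp add: minor.del_vertex)
next
  case (del_edge H' H e) then show ?case by (simp add: minor.del_edge)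
next
  case (contract H' H u v) then show ?case by (simp add: minor.contract)
qed

lemma minor_del_edges:
  assumes "finite D"
  shows "D \<subseteq> E \<Longrightarrow> minor (V, E) (V, E - D)"
  using assms
proof (induction D rule: finite_induct)
  case empty
  then show ?case by (simp add: minor.refl)
next
  case (insert e D)
  then have m: "minor (V, E) (V, E - D)" by auto
  have "e \<in> snd (V, E - D)" using insert by auto
  from minor.del_edge[OF m this] have "minor (V, E) (V, E - D - {e})"
    by (simp add: delete_edge_def)
  moreover have "E - insert e D = E - D - {e}" by auto
  ultimately show ?case by simp
qed

lemma minor_del_vertices:
  assumes "finite X"
  shows "X \<subseteq> V \<Longrightarrow> (\<forall>e\<in>E. e \<inter> X = {}) \<Longrightarrow> minor (V, E) (V - X, E)"
  using assms
proof (induction X rule: finite_induct)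
  case empty
  then show ?case by (simp add: minor.refl)
next
  case (insert x X)
  then have m: "minor (V, E) (V - X, E)" by auto
  have "x \<in> fst (V - X, E)" using insert by auto
  from minor.del_vertex[OF m this] have "minor (V, E) (V - X - {x}, {e \<in> E. x \<notin> e})"
    by (simp add: delete_vertex_def)
  moreover have "{e \<in> E. x \<notin> e} = E" using insert.prems by auto
  moreover have "V - insert x X = V - X - {x}" by auto
  ultimately show ?case by simp
qed



definition cmap :: "'a \<Rightarrow> 'a \<Rightarrow> 'a \<Rightarrow> 'a" where
  "cmap u w z = (if z = w then u else z)"

lemma contract_edge_eq:
  "contract_edge u w (V, E) = (V - {w}, {e'. \<exists>e\<in>E. e' = cmap u w ` e \<and> card e' = 2})"
  unfolding contract_edge_def cmap_def by simp

lemma cmap_edge: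
  assumes "{x, y} \<in> E" "cmap u w x \<noteq> cmap u w y"
  shows "{cmap u w x, cmap u w y} \<in> snd (contract_edge u w (V, E))"
proof -
  have "cmap u w ` {x, y} = {cmap u w x, cmap u w y}" by simp
  moreover have "card {cmap u w x, cmap u w y} = 2" using assms(2) by simp
  ultimately have "\<exists>e\<in>E. {cmap u w x, cmap u w y} = cmap u w ` e \<and> card {cmap u w x, cmap u w y} = 2"
    using assms(1) by metis
  then show ?thesis unfolding contract_edge_eq by simp
qed

lemma cmap_in:
  assumes "x \<in> B" "w \<in> B \<longrightarrow> u \<in> B" "u \<noteq> w"
  shows "cmap u w x \<in> B - {w}"
  using assms unfolding cmap_def by auto

lemma conn_contract:
  assumes c: "conn E B" and wu: "w \<in> B \<longrightarrow> u \<in> B" and uw: "u \<noteq> w"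
    and nB: "B \<noteq> {w}"
  shows "conn (snd (contract_edge u w (V, E))) (B - {w})"
  unfolding conn_def
proof (intro conjI allI impI)
  show "B - {w} \<noteq> {}" using c nB unfolding conn_def by auto
  fix S assume S: "S \<subseteq> B - {w}" "S \<noteq> {}" "S \<noteq> B - {w}"
  define S0 where "S0 = (if u \<in> S \<and> w \<in> B then insert w S else S)"
  have S0B: "S0 \<subseteq> B" using S wu unfolding S0_def by auto
  have S0ne: "S0 \<noteq> {}" using S unfolding S0_def by auto
  have S0nB: "S0 \<noteq> B"
  proof
    assume h: "S0 = B"
    show False
    proof (cases "u \<in> S \<and> w \<in> B")
      case True
      then have "insert w S = B" using h unfolding S0_def by simp
      then have "S = B - {w}" using S(1) by auto
      then show False using S(3) by simp
    next
      case False
      then have "S0 = S" unfolding S0_def by auto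
      then have "S = B" using h by simp
      then show False using S by auto
    qed
  qed
  obtain x y where xy: "x \<in> S0" "y \<in> B - S0" "{x, y} \<in> E"
    using c S0B S0ne S0nB unfolding conn_def by blast
  have fx: "cmap u w x \<in> S"
    using xy S unfolding S0_def cmap_def by (auto split: if_splits)
  have fy: "cmap u w y \<in> (B - {w}) - S"
    using xy S wu uw unfolding S0_def cmap_def by (auto split: if_splits)
  have "cmap u w x \<noteq> cmap u w y" using fx fy by auto
  from cmap_edge[OF xy(3) this] fx fy
  show "\<exists>a\<in>S. \<exists>b\<in>B - {w} - S. {a, b} \<in> snd (contract_edge u w (V, E))" by blast
qed

lemma simple_contract:
  assumes "simple_graph V E" "u \<in> V" "u \<noteq> w"
  shows "simple_graph (V - {w}) (snd (contract_edge u w (V, E)))"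
proof -
  have "cmap u w ` e \<subseteq> V - {w}" if "e \<in> E" for e
    using assms that unfolding simple_graph_def cmap_def by auto
  then show ?thesis using assms unfolding simple_graph_def contract_edge_eq by auto
qed

lemma K33m_contract:
  assumes K: "K33m V E B" and i: "i < 6" and uw: "u \<in> B i" "w \<in> B i" "u \<noteq> w"
  shows "K33m (V - {w}) (snd (contract_edge u w (V, E))) (\<lambda>j. B j - {w})"
proof -
  have wj: "w \<in> B j \<longrightarrow> u \<in> B j" if "j < 6" for j
  proof (cases "j = i")
    case True then show ?thesis using uw by simp
  next
    case False then show ?thesis using K33m_disj[OF K i that] uw by blast
  qed
  have nw: "B j \<noteq> {w}" if "j < 6" for j
    using wj[OF that] uw by auto
  show ?thesis unfolding K33m_def
  proof (intro conjI allI impI)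
    fix j :: nat assume j: "j < 6"
    show "B j - {w} \<subseteq> V - {w}" using K33m_sub[OF K j] by auto
    show "conn (snd (contract_edge u w (V, E))) (B j - {w})"
      using conn_contract[OF K33m_conn[OF K j] wj[OF j] uw(3) nw[OF j]] by blast
  next
    fix j k :: nat assume "j < 6" "k < 6" "j \<noteq> k"
    then show "(B j - {w}) \<inter> (B k - {w}) = {}" using K33m_disj[OF K] by blast
  next
    fix j k :: nat assume jk: "j < 3" "3 \<le> k" "k < 6"
    then obtain x y where xy: "x \<in> B j" "y \<in> B k" "{x, y} \<in> E"
      using K33m_adj[OF K jk] by blast
    have j6: "j < 6" using jk by simp
    have fx: "cmap u w x \<in> B j - {w}" using cmap_in[OF xy(1) wj[OF j6] uw(3)] .
    have fy: "cmap u w y \<in> B k - {w}" using cmap_in[OF xy(2) wj[OF jk(3)] uw(3)] .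
    have "B j \<inter> B k = {}" using K33m_disj[OF K j6 jk(3)] jk by auto
    then have "cmap u w x \<noteq> cmap u w y" using fx fy by auto
    from cmap_edge[OF xy(3) this] fx fy
    show "\<exists>x\<in>B j - {w}. \<exists>y\<in>B k - {w}. {x, y} \<in> snd (contract_edge u w (V, E))" by blast
  qed
qed

lemma K33m_reduce:
  "simple_graph V E \<Longrightarrow> K33m V E B \<Longrightarrow>
    \<exists>V' E' b. minor (V, E) (V', E') \<and> simple_graph V' E' \<and> K33m V' E' (\<lambda>i. {b i})"
proof (induction "\<Sum>i<6. card (B i)" arbitrary: V E B rule: less_induct)
  case less
  show ?case
  proof (cases "\<forall>i<6. \<exists>b. B i = {b}")
    case True
    then obtain b where b: "\<forall>i<6. B i = {b i}" by metis
    have "K33m V E (\<lambda>i. {b i})"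
      unfolding K33m_def
    proof (intro conjI allI impI)
      fix j k :: nat
      assume "j < 6" then show "{b j} \<subseteq> V" "conn E {b j}"
        using K33m_sub[OF less.prems(2)] b by auto
    next
      fix j k :: nat
      assume "j < 6" "k < 6" "j \<noteq> k"
      then show "{b j} \<inter> {b k} = {}" using K33m_disj[OF less.prems(2)] b by metis
    next
      fix j k :: nat
      assume "j < 3" "3 \<le> k" "k < 6"
      moreover have "j < 6" using \<open>j < 3\<close> by simp
      ultimately show "\<exists>x\<in>{b j}. \<exists>y\<in>{b k}. {x, y} \<in> E" using K33m_adj[OF less.prems(2)] b
        by simp
    qed
    then show ?thesis using less.prems(1) minor.refl by blast
  next
    case False
    then obtain i where i: "i < 6" "\<not> (\<exists>b. B i = {b})" by blast
    have ci: "conn E (B i)" using K33m_conn[OF less.prems(2) i(1)] .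
    then obtain u where u: "u \<in> B i" unfolding conn_def by blast
    have "B i \<noteq> {u}" using i by blast
    then obtain w where w: "w \<in> B i" "w \<noteq> u" "{u, w} \<in> E" using conn_edge[OF ci u] by blast
    have BV: "B j \<subseteq> V" if "j < 6" for j using K33m_sub[OF less.prems(2) that] .
    have finV: "finite V" using less.prems(1) unfolding simple_graph_def by simp
    have uV: "u \<in> V" using BV[OF i(1)] u by auto
    let ?G = "contract_edge u w (V, E)"
    have "{u, w} \<in> snd (V, E)" using w by simp
    from minor.contract[OF minor.refl[of "(V, E)"] this] w(2)
    have m1: "minor (V, E) ?G" by simp
    have s1: "simple_graph (V - {w}) (snd ?G)" using simple_contract[OF less.prems(1) uV] w by simp
    have K1: "K33m (V - {w}) (snd ?G) (\<lambda>j. B j - {w})"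
      using K33m_contract[OF less.prems(2) i(1) u w(1)] w by simp
    have lt: "(\<Sum>j<6. card (B j - {w})) < (\<Sum>j<6. card (B j))"
    proof (rule sum_strict_mono_ex1)
      show "finite {..<6::nat}" by simp
      show "\<forall>j\<in>{..<6}. card (B j - {w}) \<le> card (B j)"
      proof
        fix j assume "j \<in> {..<6::nat}"
        then have "finite (B j)" using BV[of j] finV finite_subset by auto
        then show "card (B j - {w}) \<le> card (B j)" by (rule card_mono) auto
      qed
      have "finite (B i)" using BV[OF i(1)] finV finite_subset by blast
      then have "card (B i) > 0" using w(1) card_gt_0_iff by blast
      then have "card (B i - {w}) < card (B i)" using w(1) \<open>finite (B i)\<close> by simp
      then show "\<exists>j\<in>{..<6}. card (B j - {w}) < card (B j)" using i(1) by blast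
    qed
    obtain V' E' b where r: "minor (V - {w}, snd ?G) (V', E')" "simple_graph V' E'"
      "K33m V' E' (\<lambda>i. {b i})"
      using less.hyps[OF lt s1 K1] by blast
    have "?G = (V - {w}, snd ?G)" by (simp add: contract_edge_eq)
    then have "minor (V, E) (V - {w}, snd ?G)" using m1 by simp
    then have "minor (V, E) (V', E')" using minor_trans[OF r(1)] by simp
    then show ?thesis using r by blast
  qed
qed

lemma K33m_not_free:
  assumes s: "simple_graph V E" and K: "K33m V E B"
  shows "\<not> K33_minor_free V E"
proof -
  obtain V' E' b where r: "minor (V, E) (V', E')" "simple_graph V' E'" "K33m V' E' (\<lambda>i. {b i})"
    using K33m_reduce[OF s K] by blast
  have bd: "b i \<noteq> b j" if "i < 6" "j < 6" "i \<noteq> j" for i j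
    using K33m_disj[OF r(3) that] by auto
  have bV: "b i \<in> V'" if "i < 6" for i using K33m_sub[OF r(3) that] by auto
  have badj: "{b i, b j} \<in> E'" if "i < 3" "3 \<le> j" "j < 6" for i j
    using K33m_adj[OF r(3) that] by auto
  define A where "A = {b 0, b 1, b 2}"
  define B where "B = {b 3, b 4, b 5}"
  define T where "T = {{x, y} | x y. x \<in> A \<and> y \<in> B}"
  define P where "P = A \<union> B"
  have TE: "T \<subseteq> E'" unfolding T_def A_def B_def
    using badj[of 0 3] badj[of 0 4] badj[of 0 5] badj[of 1 3] badj[of 1 4] badj[of 1 5]
      badj[of 2 3] badj[of 2 4] badj[of 2 5] by auto
  have finE: "finite E'" using r(2) unfolding simple_graph_def
    by (meson Pow_iff finite_Pow_iff finite_subset subsetI)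
  have m2: "minor (V', E') (V', E' - (E' - T))"
    using minor_del_edges[of "E' - T" E' V'] finE by simp
  have "E' - (E' - T) = T" using TE by auto
  with m2 have m2': "minor (V', E') (V', T)" by simp
  have PV: "P \<subseteq> V'" unfolding P_def A_def B_def using bV[of 0] bV[of 1] bV[of 2] bV[of 3] bV[of 4] bV[of 5] by auto
  have finV: "finite V'" using r(2) unfolding simple_graph_def by simp
  have "\<forall>e\<in>T. e \<inter> (V' - P) = {}" unfolding T_def P_def by auto
  then have m3: "minor (V', T) (V' - (V' - P), T)"
    using minor_del_vertices[of "V' - P" V' T] finV by simp
  have "V' - (V' - P) = P" using PV by auto
  with m3 have m3': "minor (V', T) (P, T)" by simp
  have "minor (V, E) (P, T)" using minor_trans[OF m3' minor_trans[OF m2' r(1)]] .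
  moreover have "is_K33 (P, T)"
    unfolding is_K33_def
  proof (intro exI conjI)
    show "A \<inter> B = {}" unfolding A_def B_def
      using bd[of 0 3] bd[of 0 4] bd[of 0 5] bd[of 1 3] bd[of 1 4] bd[of 1 5]
        bd[of 2 3] bd[of 2 4] bd[of 2 5] by auto
    show "card A = 3" unfolding A_def using bd[of 0 1] bd[of 0 2] bd[of 1 2] by simp
    show "card B = 3" unfolding B_def using bd[of 3 4] bd[of 3 5] bd[of 4 5] by simp
    show "fst (P, T) = A \<union> B" unfolding P_def by simp
    show "snd (P, T) = {{a, b} |a b. a \<in> A \<and> b \<in> B}" unfolding T_def by simp
  qed
  ultimately show ?thesis unfolding K33_minor_free_def by blast
qed



definition adjs :: "'a set set \<Rightarrow> 'a set \<Rightarrow> 'a set \<Rightarrow> bool" where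
  "adjs F X Y \<longleftrightarrow> (\<exists>x\<in>X. \<exists>y\<in>Y. {x, y} \<in> F)"

lemma nat_lt5: "(i::nat) < 5 \<Longrightarrow> i = 0 \<or> i = 1 \<or> i = 2 \<or> i = 3 \<or> i = 4" by auto
lemma nat_lt6: "(i::nat) < 6 \<Longrightarrow> i = 0 \<or> i = 1 \<or> i = 2 \<or> i = 3 \<or> i = 4 \<or> i = 5" by auto

lemma K23m_intro5:
  fixes B0 B1 B2 B3 B4 :: "'a set"
  assumes sub: "B0 \<subseteq> W" "B1 \<subseteq> W" "B2 \<subseteq> W" "B3 \<subseteq> W" "B4 \<subseteq> W"
    and cn: "conn F B0" "conn F B1" "conn F B2" "conn F B3" "conn F B4"
    and d: "B0 \<inter> B1 = {}" "B0 \<inter> B2 = {}" "B0 \<inter> B3 = {}" "B0 \<inter> B4 = {}"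
      "B1 \<inter> B2 = {}" "B1 \<inter> B3 = {}" "B1 \<inter> B4 = {}"
      "B2 \<inter> B3 = {}" "B2 \<inter> B4 = {}" "B3 \<inter> B4 = {}"
    and a: "adjs F B0 B2" "adjs F B0 B3" "adjs F B0 B4" "adjs F B1 B2" "adjs F B1 B3" "adjs F B1 B4"
  shows "\<exists>B. K23m W F B"
proof
  let ?B = "\<lambda>i::nat. [B0, B1, B2, B3, B4] ! i"
  show "K23m W F ?B" unfolding K23m_def
  proof (intro conjI allI impI)
    fix i :: nat assume "i < 5"
    then have "i = 0 \<or> i = 1 \<or> i = 2 \<or> i = 3 \<or> i = 4" by (rule nat_lt5)
    then show "?B i \<subseteq> W" "conn F (?B i)" using sub cn by (elim disjE; simp)+
  next
    fix i j :: nat assume ij: "i < 5" "j < 5" "i \<noteq> j"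
    have d': "B1 \<inter> B0 = {}" "B2 \<inter> B0 = {}" "B3 \<inter> B0 = {}" "B4 \<inter> B0 = {}"
      "B2 \<inter> B1 = {}" "B3 \<inter> B1 = {}" "B4 \<inter> B1 = {}"
      "B3 \<inter> B2 = {}" "B4 \<inter> B2 = {}" "B4 \<inter> B3 = {}" using d by auto
    from nat_lt5[OF ij(1)] nat_lt5[OF ij(2)] ij(3)
    show "?B i \<inter> ?B j = {}" using d d' by auto
  next
    fix i j :: nat assume ij: "i < 2" "2 \<le> j" "j < 5"
    then have "i = 0 \<or> i = 1" "j = 2 \<or> j = 3 \<or> j = 4" by auto
    then have "adjs F (?B i) (?B j)" using a by (elim disjE; simp)
    then show "\<exists>x\<in>?B i. \<exists>y\<in>?B j. {x, y} \<in> F" unfolding adjs_def .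
  qed
qed

lemma K33m_intro6:
  fixes B0 B1 B2 B3 B4 B5 :: "'a set"
  assumes sub: "B0 \<subseteq> W" "B1 \<subseteq> W" "B2 \<subseteq> W" "B3 \<subseteq> W" "B4 \<subseteq> W" "B5 \<subseteq> W"
    and cn: "conn F B0" "conn F B1" "conn F B2" "conn F B3" "conn F B4" "conn F B5"
    and d: "B0 \<inter> B1 = {}" "B0 \<inter> B2 = {}" "B0 \<inter> B3 = {}" "B0 \<inter> B4 = {}" "B0 \<inter> B5 = {}"
      "B1 \<inter> B2 = {}" "B1 \<inter> B3 = {}" "B1 \<inter> B4 = {}" "B1 \<inter> B5 = {}"
      "B2 \<inter> B3 = {}" "B2 \<inter> B4 = {}" "B2 \<inter> B5 = {}"
      "B3 \<inter> B4 = {}" "B3 \<inter> B5 = {}" "B4 \<inter> B5 = {}"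
    and a: "adjs F B0 B3" "adjs F B0 B4" "adjs F B0 B5" "adjs F B1 B3" "adjs F B1 B4" "adjs F B1 B5"
      "adjs F B2 B3" "adjs F B2 B4" "adjs F B2 B5"
  shows "\<exists>B. K33m W F B"
proof
  let ?B = "\<lambda>i::nat. [B0, B1, B2, B3, B4, B5] ! i"
  show "K33m W F ?B" unfolding K33m_def
  proof (intro conjI allI impI)
    fix i :: nat assume "i < 6"
    then have "i = 0 \<or> i = 1 \<or> i = 2 \<or> i = 3 \<or> i = 4 \<or> i = 5" by (rule nat_lt6)
    then show "?B i \<subseteq> W" "conn F (?B i)" using sub cn by (elim disjE; simp)+
  next
    fix i j :: nat assume ij: "i < 6" "j < 6" "i \<noteq> j"
    have d': "B1 \<inter> B0 = {}" "B2 \<inter> B0 = {}" "B3 \<inter> B0 = {}" "B4 \<inter> B0 = {}" "B5 \<inter> B0 = {}"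
      "B2 \<inter> B1 = {}" "B3 \<inter> B1 = {}" "B4 \<inter> B1 = {}" "B5 \<inter> B1 = {}"
      "B3 \<inter> B2 = {}" "B4 \<inter> B2 = {}" "B5 \<inter> B2 = {}"
      "B4 \<inter> B3 = {}" "B5 \<inter> B3 = {}" "B5 \<inter> B4 = {}" using d by auto
    from nat_lt6[OF ij(1)] nat_lt6[OF ij(2)] ij(3)
    show "?B i \<inter> ?B j = {}" using d d' by auto
  next
    fix i j :: nat assume ij: "i < 3" "3 \<le> j" "j < 6"
    then have "i = 0 \<or> i = 1 \<or> i = 2" "j = 3 \<or> j = 4 \<or> j = 5" by auto
    then have "adjs F (?B i) (?B j)" using a by (elim disjE; simp)
    then show "\<exists>x\<in>?B i. \<exists>y\<in>?B j. {x, y} \<in> F" unfolding adjs_def .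
  qed
qed

lemma adjs_single: "{x, y} \<in> F \<Longrightarrow> adjs F {x} {y}"
  unfolding adjs_def by auto

lemma adjs_I: "x \<in> X \<Longrightarrow> y \<in> Y \<Longrightarrow> {x, y} \<in> F \<Longrightarrow> adjs F X Y"
  unfolding adjs_def by auto



lemma edge_in:
  assumes "simple_graph W F" "{x, y} \<in> F"
  shows "x \<in> W" "y \<in> W" "x \<noteq> y"
proof -
  have "{x, y} \<subseteq> W" "card {x, y} = 2" using assms unfolding simple_graph_def by auto
  then show "x \<in> W" "y \<in> W" "x \<noteq> y" by auto
qed

lemma edge_form:
  assumes "simple_graph W F" "e \<in> F"
  shows "\<exists>x y. x \<noteq> y \<and> e = {x, y}"
proof -
  have "card e = 2" using assms unfolding simple_graph_def by blast
  then show ?thesis by (metis card_2_iff)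
qed

lemma finite_F: "simple_graph W F \<Longrightarrow> finite F"
  unfolding simple_graph_def by (meson Pow_iff finite_Pow_iff finite_subset subsetI)

lemma nb_sub:
  assumes "simple_graph W F"
  shows "nb F x \<subseteq> W"
proof
  fix y assume "y \<in> nb F x"
  then have "{x, y} \<in> F" by (simp add: nb_def)
  then show "y \<in> W" by (rule edge_in(2)[OF assms])
qed

lemma nb_irrefl:
  assumes "simple_graph W F"
  shows "x \<notin> nb F x"
proof
  assume "x \<in> nb F x"
  then have "{x, x} \<in> F" unfolding nb_def by simp
  from edge_in(3)[OF assms this] show False by simp
qed

lemma nb_sym: "y \<in> nb F x \<longleftrightarrow> x \<in> nb F y"
  unfolding nb_def by (simp add: insert_commute)

lemma nb_iff: "y \<in> nb F x \<longleftrightarrow> {x, y} \<in> F"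
  unfolding nb_def by simp

lemma finite_nb: "simple_graph W F \<Longrightarrow> finite (nb F x)"
  using nb_sub unfolding simple_graph_def by (meson finite_subset)

lemma card_inc:
  assumes s: "simple_graph W F"
  shows "card {e \<in> F. x \<in> e} = card (nb F x)"
proof -
  have "bij_betw (\<lambda>y. {x, y}) (nb F x) {e \<in> F. x \<in> e}"
  proof (rule bij_betwI')
    fix y z assume "y \<in> nb F x" "z \<in> nb F x"
    show "({x, y} = {x, z}) = (y = z)" using nb_irrefl[OF s] \<open>y \<in> nb F x\<close> \<open>z \<in> nb F x\<close>
      by (metis doubleton_eq_iff)
  next
    fix y assume "y \<in> nb F x" then show "{x, y} \<in> {e \<in> F. x \<in> e}" unfolding nb_def by simp
  next
    fix e assume "e \<in> {e \<in> F. x \<in> e}"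
    then obtain a b where ab: "a \<noteq> b" "e = {a, b}" "e \<in> F" "x \<in> e" using edge_form[OF s] by blast
    show "\<exists>y\<in>nb F x. e = {x, y}"
    proof (cases "x = a")
      case True then show ?thesis using ab unfolding nb_def by auto
    next
      case False then have "x = b" using ab by auto
      then show ?thesis using ab unfolding nb_def by (auto simp: insert_commute)
    qed
  qed
  then show ?thesis by (simp add: bij_betw_same_card)
qed

lemma handshake:
  assumes s: "simple_graph W F"
  shows "(\<Sum>x\<in>W. card (nb F x)) = 2 * card F"
proof -
  have fW: "finite W" using s unfolding simple_graph_def by simp
  have fF: "finite F" using finite_F[OF s] .
  have "(\<Sum>x\<in>W. card (nb F x)) = (\<Sum>x\<in>W. card {e \<in> F. x \<in> e})"
    using card_inc[OF s] by simp
  also have "\<dots> = (\<Sum>x\<in>W. \<Sum>e\<in>F. if x \<in> e then 1 else 0)"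
    using fF by (simp add: sum.inter_filter[symmetric])
  also have "\<dots> = (\<Sum>e\<in>F. \<Sum>x\<in>W. if x \<in> e then 1 else 0)"
    by (rule sum.swap)
  also have "\<dots> = (\<Sum>e\<in>F. card {x \<in> W. x \<in> e})"
    using fW by (simp add: sum.inter_filter[symmetric])
  also have "\<dots> = (\<Sum>e\<in>F. 2)"
  proof (rule sum.cong)
    fix e assume "e \<in> F"
    then have "e \<subseteq> W" "card e = 2" using s unfolding simple_graph_def by auto
    moreover then have "{x \<in> W. x \<in> e} = e" by auto
    ultimately show "card {x \<in> W. x \<in> e} = 2" by simp
  qed simp
  finally show ?thesis by simp
qed

lemma comp_exists:
  assumes "finite S" "z \<in> S"
  shows "\<exists>K. K \<subseteq> S \<and> z \<in> K \<and> conn F K \<and> (\<forall>p\<in>K. \<forall>q\<in>S - K. {p, q} \<notin> F)"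
proof -
  let ?P = "\<lambda>K. K \<subseteq> S \<and> z \<in> K \<and> conn F K"
  have P0: "?P {z}" using assms by simp
  have bnd: "\<forall>K. ?P K \<longrightarrow> card K < card S + 1"
    using assms(1) by (auto intro: card_mono le_imp_less_Suc)
  obtain K where K: "?P K" "\<forall>K'. ?P K' \<longrightarrow> card K' \<le> card K"
    using ex_has_greatest_nat[of ?P "{z}" card "card S + 1"] P0 bnd by blast
  have "\<forall>p\<in>K. \<forall>q\<in>S - K. {p, q} \<notin> F"
  proof (intro ballI notI)
    fix p q assume pq: "p \<in> K" "q \<in> S - K" "{p, q} \<in> F"
    have "conn F (insert q K)"
      using conn_insert[OF K(1)[THEN conjunct2, THEN conjunct2], of q p] pq by (simp add: insert_commute)
    then have "?P (insert q K)" using K pq by auto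
    then have "card (insert q K) \<le> card K" using K(2) by blast
    moreover have "finite K" using K(1) assms(1) finite_subset by blast
    ultimately show False using pq by simp
  qed
  then show ?thesis using K by blast
qed

lemma lift_conn:
  assumes c: "conn F' B" and rB: "r \<notin> B" and ar: "{a, r} \<in> F" and rA: "\<forall>x\<in>A. {r, x} \<in> F"
    and F': "F' \<subseteq> F \<union> {{a, x} | x. x \<in> A}"
  shows "conn F (if a \<in> B then insert r B else B)"
proof (cases "a \<in> B")
  case False
  have "conn F B" unfolding conn_def
  proof (intro conjI allI impI)
    show "B \<noteq> {}" using c unfolding conn_def by simp
    fix S assume S: "S \<subseteq> B" "S \<noteq> {}" "S \<noteq> B"
    then obtain x y where xy: "x \<in> S" "y \<in> B - S" "{x, y} \<in> F'" using c unfolding conn_def by blast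
    have "{x, y} \<in> F"
    proof -
      have "{x, y} \<in> F \<or> (\<exists>t. {x, y} = {a, t})" using xy F' by blast
      moreover have "\<not> (\<exists>t. {x, y} = {a, t})" using False xy S by (auto simp: doubleton_eq_iff)
      ultimately show ?thesis by blast
    qed
    then show "\<exists>x\<in>S. \<exists>y\<in>B - S. {x, y} \<in> F" using xy by blast
  qed
  then show ?thesis using False by simp
next
  case True
  have "conn F (insert r B)" unfolding conn_def
  proof (intro conjI allI impI)
    show "insert r B \<noteq> {}" by simp
    fix S assume S: "S \<subseteq> insert r B" "S \<noteq> {}" "S \<noteq> insert r B"
    show "\<exists>x\<in>S. \<exists>y\<in>insert r B - S. {x, y} \<in> F"
    proof (cases "S - {r} = {}")
      case True
      then have "S = {r}" using S by auto
      moreover have "a \<noteq> r" using \<open>a \<in> B\<close> rB by auto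
      ultimately show ?thesis using ar \<open>a \<in> B\<close> by (auto simp: insert_commute)
    next
      case ne: False
      show ?thesis
      proof (cases "S - {r} = B")
        case True
        then have "r \<notin> S" using S by auto
        then show ?thesis using ar \<open>a \<in> B\<close> True by blast
      next
        case nB: False
        have "S - {r} \<subseteq> B" using S by auto
        then obtain x y where xy: "x \<in> S - {r}" "y \<in> B - (S - {r})" "{x, y} \<in> F'"
          using c ne nB unfolding conn_def by blast
        have yS: "y \<notin> S" using xy rB by auto
        show ?thesis
        proof (cases "{x, y} \<in> F")
          case True then show ?thesis using xy yS by blast
        next
          case False
          then obtain t where t: "t \<in> A" "{x, y} = {a, t}" using xy F' by blast
          then have "(x = a \<and> y = t) \<or> (x = t \<and> y = a)" by (auto simp: doubleton_eq_iff)
          then show ?thesis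
          proof
            assume h: "x = a \<and> y = t"
            show ?thesis
            proof (cases "r \<in> S")
              case True then show ?thesis using rA t h xy yS by blast
            next
              case False then show ?thesis using ar h xy by blast
            qed
          next
            assume h: "x = t \<and> y = a"
            show ?thesis
            proof (cases "r \<in> S")
              case True
              have "{r, a} \<in> F" using ar by (simp add: insert_commute)
              moreover have "a \<in> insert r B - S" using h xy yS by simp
              ultimately show ?thesis using True by blast
            next
              case False then show ?thesis using rA t h xy by (auto simp: insert_commute)
            qed
          qed
        qed
      qed
    qed
  qed
  then show ?thesis using True by simp
qed

lemma lift_adj:
  assumes xy: "x \<in> B1" "y \<in> B2" "{x, y} \<in> F'" and rA: "\<forall>x\<in>A. {r, x} \<in> F"
    and F': "F' \<subseteq> F \<union> {{a, x} | x. x \<in> A}"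
  shows "\<exists>p\<in>(if a \<in> B1 then insert r B1 else B1). \<exists>q\<in>(if a \<in> B2 then insert r B2 else B2). {p, q} \<in> F"
proof (cases "{x, y} \<in> F")
  case True then show ?thesis using xy by auto
next
  case False
  then obtain t where t: "t \<in> A" "{x, y} = {a, t}" using xy F' by blast
  then have "(x = a \<and> y = t) \<or> (x = t \<and> y = a)" by (auto simp: doubleton_eq_iff)
  then show ?thesis
  proof
    assume h: "x = a \<and> y = t"
    then have "r \<in> (if a \<in> B1 then insert r B1 else B1)" using xy by simp
    moreover have "{r, t} \<in> F" using rA t by (metis insert_commute)
    moreover have "t \<in> (if a \<in> B2 then insert r B2 else B2)" using h xy by simp
    ultimately show ?thesis by blast
  next
    assume h: "x = t \<and> y = a"
    then have "r \<in> (if a \<in> B2 then insert r B2 else B2)" using xy by simp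
    moreover have "{t, r} \<in> F" using rA t by (metis insert_commute)
    moreover have "t \<in> (if a \<in> B1 then insert r B1 else B1)" using h xy by simp
    ultimately show ?thesis by blast
  qed
qed

lemma K23m_lift:
  assumes K: "K23m W' F' B" and rW': "r \<notin> W'" and WW: "W' \<subseteq> W" and rW: "r \<in> W"
    and ar: "{a, r} \<in> F" and rA: "\<forall>x\<in>A. {r, x} \<in> F"
    and F': "F' \<subseteq> F \<union> {{a, x} | x. x \<in> A}"
  shows "K23m W F (\<lambda>i. if a \<in> B i then insert r (B i) else B i)"
  unfolding K23m_def
proof (intro conjI allI impI)
  fix i :: nat assume i: "i < 5"
  have rB: "r \<notin> B i" using K23m_sub[OF K i] rW' by auto
  show "(if a \<in> B i then insert r (B i) else B i) \<subseteq> W" using K23m_sub[OF K i] WW rW by auto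
  show "conn F (if a \<in> B i then insert r (B i) else B i)"
    using lift_conn[OF K23m_conn[OF K i] rB ar rA F'] .
next
  fix i j :: nat assume ij: "i < 5" "j < 5" "i \<noteq> j"
  have d: "B i \<inter> B j = {}" using K23m_disj[OF K ij] .
  have "r \<notin> B i" "r \<notin> B j" using K23m_sub[OF K ij(1)] K23m_sub[OF K ij(2)] rW' by auto
  then show "(if a \<in> B i then insert r (B i) else B i) \<inter> (if a \<in> B j then insert r (B j) else B j) = {}"
    using d by auto
next
  fix i j :: nat assume ij: "i < 2" "2 \<le> j" "j < 5"
  obtain x y where "x \<in> B i" "y \<in> B j" "{x, y} \<in> F'" using K23m_adj[OF K ij] by blast
  from lift_adj[OF this rA F']
  show "\<exists>x\<in>if a \<in> B i then insert r (B i) else B i. \<exists>y\<in>if a \<in> B j then insert r (B j) else B j. {x, y} \<in> F" .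
qed

lemma K23m_mono: "K23m W' F' B \<Longrightarrow> W' \<subseteq> W \<Longrightarrow> F' \<subseteq> F \<Longrightarrow> K23m W F B"
  unfolding K23m_def using conn_mono by blast

lemma simple_del: "simple_graph W F \<Longrightarrow> simple_graph (W - {x}) {e \<in> F. x \<notin> e}"
  unfolding simple_graph_def by auto

lemma card_del:
  assumes s: "simple_graph W F"
  shows "card F = card {e \<in> F. x \<notin> e} + card (nb F x)"
proof -
  have "F = {e \<in> F. x \<notin> e} \<union> {e \<in> F. x \<in> e}" by auto
  moreover have "finite F" using finite_F[OF s] .
  ultimately have "card F = card {e \<in> F. x \<notin> e} + card {e \<in> F. x \<in> e}"
    by (metis (no_types, lifting) card_Un_disjoint disjoint_iff finite_Un mem_Collect_eq)
  then show ?thesis using card_inc[OF s] by simp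
qed



lemma card_ge3:
  assumes "3 \<le> card A"
  shows "\<exists>a b c. a \<in> A \<and> b \<in> A \<and> c \<in> A \<and> a \<noteq> b \<and> a \<noteq> c \<and> b \<noteq> c"
proof -
  obtain T where T: "T \<subseteq> A" "card T = 3" using obtain_subset_with_card_n[OF assms] by blast
  then obtain x y z where "T = {x, y, z}" "x \<noteq> y" "y \<noteq> z" "x \<noteq> z" by (metis card_3_iff)
  then show ?thesis using T(1) by blast
qed

lemma card2_other:
  assumes "card A = 2" "x \<in> A"
  shows "\<exists>z. z \<noteq> x \<and> A = {x, z}"
proof -
  obtain p q where pq: "A = {p, q}" "p \<noteq> q" using assms(1) by (metis card_2_iff)
  show ?thesis
  proof (cases "x = p")
    case True then show ?thesis using pq by (intro exI[of _ q]) simp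
  next
    case False then have "x = q" using pq assms(2) by blast
    then show ?thesis using pq by (metis insert_commute)
  qed
qed

lemma cmap_img_nw:
  assumes "w \<notin> e"
  shows "cmap u w ` e = e"
proof -
  have "cmap u w ` e = (\<lambda>z. z) ` e"
    by (rule image_cong) (use assms in \<open>auto simp: cmap_def\<close>)
  then show ?thesis by simp
qed

lemma cmap_img_w: "t \<noteq> w \<Longrightarrow> cmap u w ` {w, t} = {u, t}"
  by (auto simp: cmap_def)

lemma edge_other:
  assumes s: "simple_graph W F" and e: "e \<in> F" and w: "w \<in> e"
  shows "\<exists>t. t \<noteq> w \<and> e = {w, t}"
proof -
  obtain p q where pq: "p \<noteq> q" "e = {p, q}" using edge_form[OF s e] by blast
  then show ?thesis using w by (metis insertE singletonD insert_commute)
qed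

lemma contract_sub:
  assumes s: "simple_graph W F"
  shows "snd (contract_edge u w (W, F)) \<subseteq> F \<union> {{u, x} | x. x \<in> nb F w}"
proof
  fix e' assume "e' \<in> snd (contract_edge u w (W, F))"
  then obtain e where e: "e \<in> F" "e' = cmap u w ` e" "card e' = 2"
    unfolding contract_edge_eq by auto
  show "e' \<in> F \<union> {{u, x} | x. x \<in> nb F w}"
  proof (cases "w \<in> e")
    case False then show ?thesis using e cmap_img_nw[OF False] by simp
  next
    case True
    then obtain t where t: "t \<noteq> w" "e = {w, t}" using edge_other[OF s e(1)] by blast
    then have "e' = {u, t}" using e cmap_img_w by simp
    moreover have "t \<in> nb F w" using t e unfolding nb_def by simp
    ultimately show ?thesis by blast
  qed
qed

lemma card_contract:
  assumes s: "simple_graph W F" and uw: "{u, w} \<in> F"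
  shows "card F \<le> card (snd (contract_edge u w (W, F))) + 1 + card (nb F u \<inter> nb F w)"
proof -
  let ?F' = "snd (contract_edge u w (W, F))"
  have u: "u \<in> W" "u \<noteq> w" using edge_in[OF s uw] by auto
  have finF': "finite ?F'" using finite_F[OF simple_contract[OF s u]] by simp
  define C where "C = nb F u \<inter> nb F w"
  define D where "D = (\<lambda>t. {w, t}) ` C"
  define X where "X = F - {{u, w}} - D"
  have key: "(w \<notin> e \<and> cmap u w ` e = e) \<or>
      (\<exists>t. e = {w, t} \<and> t \<noteq> w \<and> t \<noteq> u \<and> t \<notin> nb F u \<and> cmap u w ` e = {u, t})"
    if eX: "e \<in> X" for e
  proof (cases "w \<in> e")
    case False then show ?thesis using cmap_img_nw[OF False] by simp
  next
    case True
    have eF: "e \<in> F" using eX unfolding X_def by simp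
    obtain t where t: "t \<noteq> w" "e = {w, t}" using edge_other[OF s eF True] by blast
    have tu: "t \<noteq> u"
    proof
      assume "t = u"
      then have "e = {u, w}" using t by (simp add: insert_commute)
      then show False using eX unfolding X_def by simp
    qed
    have tw: "t \<in> nb F w" using t eF unfolding nb_def by simp
    have "t \<notin> nb F u"
    proof
      assume "t \<in> nb F u"
      then have "t \<in> C" using tw unfolding C_def by simp
      then have "e \<in> D" using t unfolding D_def by simp
      then show False using eX unfolding X_def by simp
    qed
    moreover have "cmap u w ` e = {u, t}" using t cmap_img_w by simp
    ultimately show ?thesis using t tu by (intro disjI2 exI[of _ t]) simp
  qed
  have inj: "inj_on (\<lambda>e. cmap u w ` e) X"
  proof (rule inj_onI)
    fix e1 e2 assume e: "e1 \<in> X" "e2 \<in> X" "cmap u w ` e1 = cmap u w ` e2"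
    have F1: "e1 \<in> F" "e2 \<in> F" using e unfolding X_def by auto
    show "e1 = e2"
    proof (cases "w \<in> e1")
      case False
      then have i1: "cmap u w ` e1 = e1" using key[OF e(1)] by blast
      show ?thesis
      proof (cases "w \<in> e2")
        case False
        then have "cmap u w ` e2 = e2" using key[OF e(2)] by blast
        then show ?thesis using i1 e by simp
      next
        case True
        then obtain t where t: "t \<notin> nb F u" "cmap u w ` e2 = {u, t}" using key[OF e(2)] by blast
        then have "{u, t} \<in> F" using i1 e F1 by simp
        then show ?thesis using t unfolding nb_def by simp
      qed
    next
      case True
      then obtain t1 where t1: "e1 = {w, t1}" "t1 \<noteq> u" "t1 \<notin> nb F u" "cmap u w ` e1 = {u, t1}"
        using key[OF e(1)] by blast
      show ?thesis
      proof (cases "w \<in> e2")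
        case False
        then have "cmap u w ` e2 = e2" using key[OF e(2)] by blast
        then have "{u, t1} \<in> F" using t1 e F1 by simp
        then show ?thesis using t1 unfolding nb_def by simp
      next
        case True
        then obtain t2 where t2: "e2 = {w, t2}" "t2 \<noteq> u" "cmap u w ` e2 = {u, t2}"
          using key[OF e(2)] by blast
        have "{u, t1} = {u, t2}" using t1 t2 e by simp
        then have "t1 = t2" using t1 t2 by (metis doubleton_eq_iff)
        then show ?thesis using t1 t2 by simp
      qed
    qed
  qed
  have img: "(\<lambda>e. cmap u w ` e) ` X \<subseteq> ?F'"
  proof
    fix e' assume "e' \<in> (\<lambda>e. cmap u w ` e) ` X"
    then obtain e where e: "e \<in> X" "e' = cmap u w ` e" by blast
    have eF: "e \<in> F" using e unfolding X_def by simp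
    have "card e' = 2"
    proof (cases "w \<in> e")
      case False
      then have "e' = e" using key[OF e(1)] e by blast
      then show ?thesis using eF s unfolding simple_graph_def by auto
    next
      case True
      then obtain t where "t \<noteq> u" "cmap u w ` e = {u, t}" using key[OF e(1)] by blast
      then show ?thesis using e by simp
    qed
    then have "\<exists>e0\<in>F. e' = cmap u w ` e0 \<and> card e' = 2" using eF e by blast
    then show "e' \<in> ?F'" unfolding contract_edge_eq by simp
  qed
  have cX: "card X \<le> card ?F'"
    using card_inj_on_le[OF inj img finF'] .
  have finC: "finite C" unfolding C_def using finite_nb[OF s] by simp
  have cD: "card D \<le> card C" unfolding D_def using card_image_le[OF finC] .
  have finX: "finite X" unfolding X_def using finite_F[OF s] by simp
  have finD: "finite D" unfolding D_def using finC by simp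
  have "F \<subseteq> X \<union> {{u, w}} \<union> D" unfolding X_def by auto
  then have "card F \<le> card (X \<union> {{u, w}} \<union> D)"
    using finX finD by (intro card_mono) auto
  also have "\<dots> \<le> card (X \<union> {{u, w}}) + card D" by (rule card_Un_le)
  also have "\<dots> \<le> card X + 1 + card D"
    using card_Un_le[of X "{{u, w}}"] by simp
  finally show ?thesis using cX cD unfolding C_def by simp
qed

definition hassep :: "'a set \<Rightarrow> 'a set set \<Rightarrow> bool" where
  "hassep W F \<longleftrightarrow> (\<exists>W1 W2. W1 \<union> W2 = W \<and> card (W1 \<inter> W2) \<le> 1 \<and> W1 - W2 \<noteq> {} \<and> W2 - W1 \<noteq> {} \<and>
     (\<forall>x\<in>W1 - W2. \<forall>y\<in>W2 - W1. {x, y} \<notin> F))"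

lemma split_count:
  assumes s: "simple_graph W F" and U: "W1 \<union> W2 = W" and c: "card (W1 \<inter> W2) \<le> 1"
    and ne: "\<forall>x\<in>W1 - W2. \<forall>y\<in>W2 - W1. {x, y} \<notin> F"
  shows "card F = card {e \<in> F. e \<subseteq> W1} + card {e \<in> F. e \<subseteq> W2}"
proof -
  have fW: "finite W" using s unfolding simple_graph_def by simp
  have cover: "e \<subseteq> W1 \<or> e \<subseteq> W2" if eF: "e \<in> F" for e
  proof -
    obtain x y where xy: "x \<noteq> y" "e = {x, y}" using edge_form[OF s eF] by blast
    have xyF: "{x, y} \<in> F" using eF xy by simp
    have W: "x \<in> W" "y \<in> W" using edge_in[OF s xyF] by auto
    have yxF: "{y, x} \<in> F" using xyF by (simp add: insert_commute)
    have "x \<in> W1 \<or> x \<in> W2" "y \<in> W1 \<or> y \<in> W2" using W U by auto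
    moreover have "\<not> (x \<in> W1 - W2 \<and> y \<in> W2 - W1)" using ne xyF by blast
    moreover have "\<not> (y \<in> W1 - W2 \<and> x \<in> W2 - W1)" using ne yxF by blast
    ultimately show ?thesis using xy by blast
  qed
  have disj: "\<not> (e \<subseteq> W1 \<and> e \<subseteq> W2)" if "e \<in> F" for e
  proof
    assume h: "e \<subseteq> W1 \<and> e \<subseteq> W2"
    then have "e \<subseteq> W1 \<inter> W2" by auto
    moreover have "finite (W1 \<inter> W2)" using fW U by (metis finite_Int finite_Un)
    ultimately have "card e \<le> card (W1 \<inter> W2)" by (rule card_mono[rotated])
    moreover have "card e = 2" using that s unfolding simple_graph_def by auto
    ultimately show False using c by simp
  qed
  have "F = {e \<in> F. e \<subseteq> W1} \<union> {e \<in> F. e \<subseteq> W2}" using cover by auto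
  moreover have "{e \<in> F. e \<subseteq> W1} \<inter> {e \<in> F. e \<subseteq> W2} = {}" using disj by auto
  moreover have "finite F" using finite_F[OF s] .
  ultimately show ?thesis by (metis (no_types, lifting) card_Un_disjoint finite_Un)
qed

lemma simple_sub: "simple_graph W F \<Longrightarrow> W' \<subseteq> W \<Longrightarrow> simple_graph W' {e \<in> F. e \<subseteq> W'}"
  unfolding simple_graph_def by (auto intro: finite_subset)

lemma nb_sub_graph: "p \<in> K \<Longrightarrow> nb {e \<in> F. e \<subseteq> K} p = nb F p \<inter> K"
  unfolding nb_def by auto



lemma edge_sym: "{x, y} \<in> F \<Longrightarrow> {y, x} \<in> F"
  by (simp add: insert_commute)

lemma comp_obtain:
  assumes "finite S" "z \<in> S"
  obtains K where "K \<subseteq> S" "z \<in> K" "conn F K" "\<forall>p\<in>K. \<forall>q\<in>S - K. {p, q} \<notin> F"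
proof -
  from comp_exists[OF assms, of F] obtain K where
    "K \<subseteq> S \<and> z \<in> K \<and> conn F K \<and> (\<forall>p\<in>K. \<forall>q\<in>S - K. {p, q} \<notin> F)" by (elim exE)
  then show ?thesis using that by blast
qed

lemma K23_sing:
  assumes "p0 \<in> W" "p1 \<in> W" "q2 \<in> W" "q3 \<in> W" "q4 \<in> W"
    and "p0 \<noteq> p1" "p0 \<noteq> q2" "p0 \<noteq> q3" "p0 \<noteq> q4" "p1 \<noteq> q2" "p1 \<noteq> q3" "p1 \<noteq> q4"
      "q2 \<noteq> q3" "q2 \<noteq> q4" "q3 \<noteq> q4"
    and "{p0, q2} \<in> F" "{p0, q3} \<in> F" "{p0, q4} \<in> F" "{p1, q2} \<in> F" "{p1, q3} \<in> F" "{p1, q4} \<in> F"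
  shows "\<exists>B. K23m W F B"
  by (rule K23m_intro5[of "{p0}" W "{p1}" "{q2}" "{q3}" "{q4}"]) (use assms in \<open>simp_all add: adjs_single\<close>)

lemma LD_final:
  assumes s: "simple_graph W F" and nm: "\<not> (\<exists>B. K23m W F B)"
    and com: "\<forall>u w. {u, w} \<in> F \<longrightarrow> 2 \<le> card (nb F u \<inter> nb F w)"
    and ns: "\<not> hassep W F"
    and uW: "u \<in> W"
  shows "card (nb F u) \<le> 3"
proof (rule ccontr)
  assume "\<not> card (nb F u) \<le> 3"
  then have c4: "4 \<le> card (nb F u)" by simp
  define Nu where "Nu = nb F u"
  have fNu: "finite Nu" unfolding Nu_def using finite_nb[OF s] .
  have NuW: "Nu \<subseteq> W" unfolding Nu_def using nb_sub[OF s] .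
  have uNu: "u \<notin> Nu" unfolding Nu_def using nb_irrefl[OF s] .
  have eu: "{u, x} \<in> F" "{x, u} \<in> F" if "x \<in> Nu" for x
  proof -
    show "{u, x} \<in> F" using that unfolding Nu_def nb_iff .
    then show "{x, u} \<in> F" by (rule edge_sym)
  qed
  have fW: "finite W" using s unfolding simple_graph_def by simp
  have two: "card (nb F x \<inter> Nu) = 2" if xN: "x \<in> Nu" for x
  proof -
    have "2 \<le> card (nb F u \<inter> nb F x)" using com eu(1)[OF xN] by blast
    then have ge: "2 \<le> card (nb F x \<inter> Nu)" unfolding Nu_def by (simp add: Int_commute)
    have "\<not> 3 \<le> card (nb F x \<inter> Nu)"
    proof
      assume "3 \<le> card (nb F x \<inter> Nu)"
      then obtain a b c where abc: "a \<in> nb F x \<inter> Nu" "b \<in> nb F x \<inter> Nu" "c \<in> nb F x \<inter> Nu"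
        "a \<noteq> b" "a \<noteq> c" "b \<noteq> c" using card_ge3 by blast
      have xn: "x \<notin> nb F x" using nb_irrefl[OF s] .
      have aN: "a \<in> Nu" "b \<in> Nu" "c \<in> Nu" using abc by auto
      have xF: "{x, a} \<in> F" "{x, b} \<in> F" "{x, c} \<in> F" using abc by (simp_all add: nb_iff)
      have uF: "{u, a} \<in> F" "{u, b} \<in> F" "{u, c} \<in> F" using eu(1)[OF aN(1)] eu(1)[OF aN(2)] eu(1)[OF aN(3)] .
      have ne: "u \<noteq> x" "u \<noteq> a" "u \<noteq> b" "u \<noteq> c" "x \<noteq> a" "x \<noteq> b" "x \<noteq> c"
        using uNu aN xN xn abc by auto
      have W5: "u \<in> W" "x \<in> W" "a \<in> W" "b \<in> W" "c \<in> W" using uW xN aN NuW by auto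
      have "\<exists>B. K23m W F B"
        by (rule K23_sing[OF W5 ne(1-4) ne(5-7) abc(4-6) uF xF])
      then show False using nm by blast
    qed
    then show ?thesis using ge by simp
  qed
  have "Nu \<noteq> {}" using c4 unfolding Nu_def by auto
  then obtain x where xN: "x \<in> Nu" by blast
  obtain y y' where yy: "nb F x \<inter> Nu = {y, y'}" "y \<noteq> y'"
    using two[OF xN] by (metis card_2_iff)
  have yN: "y \<in> Nu" "y' \<in> Nu" using yy by auto
  have xy: "{x, y} \<in> F" "{x, y'} \<in> F" using yy unfolding nb_def by auto
  have xny: "x \<noteq> y" "x \<noteq> y'" using edge_in(3)[OF s xy(1)] edge_in(3)[OF s xy(2)] by auto
  show False
  proof (cases "{y, y'} \<in> F")
    case False
    have "y \<in> nb F x" using yy by auto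
    then have "x \<in> nb F y" using nb_sym by metis
    then have "x \<in> nb F y \<inter> Nu" using xN by simp
    then obtain z where z: "z \<noteq> x" "nb F y \<inter> Nu = {x, z}" using card2_other[OF two[OF yN(1)]] by blast
    have zN: "z \<in> Nu" and yz: "{y, z} \<in> F" using z unfolding nb_def by auto
    have zy: "z \<noteq> y" using edge_in(3)[OF s yz] by auto
    have zy': "z \<noteq> y'" using yz False by auto
    define S where "S = Nu - {x, y, y'}"
    have zS: "z \<in> S" unfolding S_def using zN z zy zy' by auto
    have fS: "finite S" unfolding S_def using fNu by simp
    obtain K where K: "K \<subseteq> S" "z \<in> K" "conn F K" "\<forall>p\<in>K. \<forall>q\<in>S - K. {p, q} \<notin> F"
      by (rule comp_obtain[OF fS zS])
    have KN: "K \<subseteq> Nu" using K(1) unfolding S_def by auto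
    have xK: "x \<notin> K" "y \<notin> K" "y' \<notin> K" using K(1) unfolding S_def by auto
    have uK: "u \<notin> K" using KN uNu by auto
    show False
    proof (cases "\<exists>p\<in>K. {p, y'} \<in> F")
      case True
      then obtain p where p: "p \<in> K" "{p, y'} \<in> F" by blast
      have "\<exists>B. K23m W F B"
      proof (rule K23m_intro5[of "{x}" W K "{y}" "{y'}" "{u}"])
        show "{x} \<subseteq> W" "K \<subseteq> W" "{y} \<subseteq> W" "{y'} \<subseteq> W" "{u} \<subseteq> W"
          using xN KN yN uW NuW by auto
        show "conn F {x}" "conn F K" "conn F {y}" "conn F {y'}" "conn F {u}" using K by auto
        show "{x} \<inter> K = {}" "{x} \<inter> {y} = {}" "{x} \<inter> {y'} = {}" "{x} \<inter> {u} = {}"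
          "K \<inter> {y} = {}" "K \<inter> {y'} = {}" "K \<inter> {u} = {}" "{y} \<inter> {y'} = {}" "{y} \<inter> {u} = {}"
          "{y'} \<inter> {u} = {}"
          using xK uK xny yy(2) xN yN uNu by auto
        show "adjs F {x} {y}" "adjs F {x} {y'}" "adjs F {x} {u}"
          using xy eu(2)[OF xN] by (auto simp: adjs_single)
        have zy2: "{z, y} \<in> F" using yz by (rule edge_sym)
        show "adjs F K {y}" using adjs_I[OF K(2) _ zy2] by simp
        show "adjs F K {y'}" using adjs_I[OF p(1) _ p(2)] by simp
        show "adjs F K {u}" using adjs_I[OF K(2) _ eu(2)[OF zN]] by simp
      qed
      then show False using nm by blast
    next
      case noy': False
      have nbp: "nb F p \<inter> Nu = (nb F p \<inter> K) \<union> (nb F p \<inter> {y})" if pK: "p \<in> K" for p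
      proof
        show "nb F p \<inter> Nu \<subseteq> nb F p \<inter> K \<union> nb F p \<inter> {y}"
        proof
          fix q assume q: "q \<in> nb F p \<inter> Nu"
          then have pq: "{p, q} \<in> F" unfolding nb_def by simp
          show "q \<in> nb F p \<inter> K \<union> nb F p \<inter> {y}"
          proof (cases "q \<in> S")
            case True
            then have "q \<in> K" using K(4) pK pq by blast
            then show ?thesis using q by simp
          next
            case False
            then have "q = x \<or> q = y \<or> q = y'" using q unfolding S_def by auto
            moreover have "q \<noteq> x"
            proof
              assume "q = x"
              then have "x \<in> nb F p" using pq unfolding nb_iff by simp
              then have "p \<in> nb F x" using nb_sym by metis
              then have "p \<in> nb F x \<inter> Nu" using pK KN by auto
              then have "p = y \<or> p = y'" using yy by auto
              then show False using pK xK by auto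
            qed
            moreover have "q \<noteq> y'" using noy' pK pq by blast
            ultimately show ?thesis using q by auto
          qed
        qed
        show "nb F p \<inter> K \<union> nb F p \<inter> {y} \<subseteq> nb F p \<inter> Nu" using KN yN by auto
      qed
      have fK: "finite K" using K(1) fS finite_subset by blast
      have sum2: "(\<Sum>p\<in>K. card (nb F p \<inter> Nu)) = 2 * card K"
        using two KN by (simp add: subset_iff)
      have split: "card (nb F p \<inter> Nu) = card (nb F p \<inter> K) + card (nb F p \<inter> {y})" if pK: "p \<in> K" for p
      proof -
        have "finite (nb F p)" using finite_nb[OF s] .
        then show ?thesis unfolding nbp[OF pK] using xK
          by (subst card_Un_disjoint) auto
      qed
      have "(\<Sum>p\<in>K. card (nb F p \<inter> Nu)) = (\<Sum>p\<in>K. card (nb F p \<inter> K) + card (nb F p \<inter> {y}))"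
        by (rule sum.cong) (simp_all add: split)
      also have "\<dots> = (\<Sum>p\<in>K. card (nb F p \<inter> K)) + (\<Sum>p\<in>K. card (nb F p \<inter> {y}))"
        by (rule sum.distrib)
      finally have "(\<Sum>p\<in>K. card (nb F p \<inter> Nu)) = (\<Sum>p\<in>K. card (nb F p \<inter> K)) + (\<Sum>p\<in>K. card (nb F p \<inter> {y}))" .
      moreover have "(\<Sum>p\<in>K. card (nb F p \<inter> K)) = 2 * card {e \<in> F. e \<subseteq> K}"
      proof -
        have sK: "simple_graph K {e \<in> F. e \<subseteq> K}" using simple_sub[OF s] K(1) NuW unfolding S_def by auto
        have "(\<Sum>p\<in>K. card (nb F p \<inter> K)) = (\<Sum>p\<in>K. card (nb {e \<in> F. e \<subseteq> K} p))"
          by (rule sum.cong) (simp_all add: nb_sub_graph)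
        then show ?thesis using handshake[OF sK] by simp
      qed
      moreover have "(\<Sum>p\<in>K. card (nb F p \<inter> {y})) = 1"
      proof -
        have "(\<Sum>p\<in>K. card (nb F p \<inter> {y})) = (\<Sum>p\<in>K. if p \<in> nb F y then 1 else 0)"
        proof (rule sum.cong)
          fix p assume "p \<in> K"
          show "card (nb F p \<inter> {y}) = (if p \<in> nb F y then 1 else 0)"
            using nb_sym[of y F p] by (cases "p \<in> nb F y") auto
        qed simp
        also have "\<dots> = card {p \<in> K. p \<in> nb F y}"
          using fK by (simp add: sum.inter_filter[symmetric])
        also have "{p \<in> K. p \<in> nb F y} = {z}"
          using z K(2) KN xK by auto
        finally show ?thesis by simp
      qed
      ultimately have "2 * card K = 2 * card {e \<in> F. e \<subseteq> K} + 1" using sum2 by simp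
      then show False by presburger
    qed
  next
    case True
    define T where "T = {x, y, y'}"
    have TN: "T \<subseteq> Nu" unfolding T_def using xN yN by auto
    have tri: "nb F t \<inter> Nu = T - {t}" if tT: "t \<in> T" for t
    proof -
      have e6: "{x, y} \<in> F" "{x, y'} \<in> F" "{y, y'} \<in> F" "{y, x} \<in> F" "{y', x} \<in> F" "{y', y} \<in> F"
        using xy True edge_sym[OF xy(1)] edge_sym[OF xy(2)] edge_sym[OF True] by auto
      have sub: "T - {t} \<subseteq> nb F t \<inter> Nu"
        using tT e6 TN unfolding T_def by (auto simp: nb_iff)
      have "card (T - {t}) = 2" using tT xny yy(2) unfolding T_def by auto
      moreover have "card (nb F t \<inter> Nu) = 2" using two tT TN by auto
      moreover have "finite (nb F t \<inter> Nu)" using fNu by simp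
      ultimately show ?thesis using card_subset_eq[OF _ sub] by simp
    qed
    have "\<not> Nu \<subseteq> T"
    proof
      assume "Nu \<subseteq> T"
      then have "card Nu \<le> card T" by (simp add: card_mono T_def)
      moreover have "card T \<le> 3" unfolding T_def by (simp add: card_insert_le_m1)
      ultimately show False using c4 unfolding Nu_def by simp
    qed
    then obtain w where wN: "w \<in> Nu" "w \<notin> T" by blast
    define S where "S = W - {u} - T"
    have wS: "w \<in> S" unfolding S_def using wN NuW uNu by auto
    have fS: "finite S" unfolding S_def using fW by simp
    obtain K where K: "K \<subseteq> S" "w \<in> K" "conn F K" "\<forall>p\<in>K. \<forall>q\<in>S - K. {p, q} \<notin> F"
      by (rule comp_obtain[OF fS wS])
    have KW: "K \<subseteq> W" "u \<notin> K" "K \<inter> T = {}" using K(1) unfolding S_def by auto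
    have "\<exists>p\<in>K. \<exists>a\<in>T. {p, a} \<in> F"
    proof (rule ccontr)
      assume h: "\<not> (\<exists>p\<in>K. \<exists>a\<in>T. {p, a} \<in> F)"
      have "hassep W F" unfolding hassep_def
      proof (intro exI conjI)
        show "insert u K \<union> (W - K) = W" using KW uW by auto
        have "insert u K \<inter> (W - K) = {u}" using KW uW by auto
        then show "card (insert u K \<inter> (W - K)) \<le> 1" by simp
        show "insert u K - (W - K) \<noteq> {}" using K(2) KW by auto
        have "x \<in> W - K - insert u K" using xN NuW KW uNu unfolding T_def by auto
        then show "W - K - insert u K \<noteq> {}" by auto
        show "\<forall>p\<in>insert u K - (W - K). \<forall>q\<in>W - K - insert u K. {p, q} \<notin> F"
        proof (intro ballI)
          fix p q assume p: "p \<in> insert u K - (W - K)" and q: "q \<in> W - K - insert u K"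
          have pK: "p \<in> K" using p uW KW by auto
          show "{p, q} \<notin> F"
          proof (cases "q \<in> T")
            case True then show ?thesis using h pK by blast
          next
            case False
            then have "q \<in> S - K" using q unfolding S_def by auto
            then show ?thesis using K(4) pK by blast
          qed
        qed
      qed
      then show False using ns by simp
    qed
    then obtain p a where pa: "p \<in> K" "a \<in> T" "{p, a} \<in> F" by blast
    have pN: "p \<notin> Nu"
    proof
      assume "p \<in> Nu"
      moreover have "a \<in> nb F p" using pa(3) unfolding nb_iff .
      ultimately have "p \<in> nb F a \<inter> Nu" using nb_sym[of a F p] by simp
      then have "p \<in> T" using tri[OF pa(2)] by auto
      then show False using pa(1) KW by auto
    qed
    define S2 where "S2 = K - Nu"
    have pS2: "p \<in> S2" unfolding S2_def using pa pN by simp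
    have fS2: "finite S2" unfolding S2_def using K(1) fS finite_subset by blast
    obtain K0 where K0: "K0 \<subseteq> S2" "p \<in> K0" "conn F K0" "\<forall>p\<in>K0. \<forall>q\<in>S2 - K0. {p, q} \<notin> F"
      by (rule comp_obtain[OF fS2 pS2])
    have K0K: "K0 \<subseteq> K" "K0 \<inter> Nu = {}" using K0(1) unfolding S2_def by auto
    have "K0 \<noteq> {}" "K0 \<noteq> K" using K0(2) K0K wN K(2) by auto
    then obtain q s0 where qs: "q \<in> K0" "s0 \<in> K - K0" "{q, s0} \<in> F"
      using K(3) K0K(1) unfolding conn_def by blast
    have s0N: "s0 \<in> Nu"
    proof (rule ccontr)
      assume "s0 \<notin> Nu"
      then have "s0 \<in> S2 - K0" using qs unfolding S2_def by auto
      then show False using K0(4) qs by blast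
    qed
    have aNu: "a \<in> Nu" using pa(2) TN by auto
    have "card (T - {a}) = 2" using tri[OF pa(2)] two[OF aNu] by simp
    then obtain b c where bc: "T - {a} = {b, c}" "b \<noteq> c" by (metis card_2_iff)
    have bcT: "b \<in> T" "c \<in> T" "b \<noteq> a" "c \<noteq> a" using bc by auto
    have ab: "{a, b} \<in> F" "{a, c} \<in> F" using tri[OF pa(2)] bc unfolding nb_def by auto
    have aN: "a \<in> Nu" using pa(2) TN by auto
    have aK0: "a \<notin> K0" using K0K aN by auto
    have bK: "b \<notin> K" "c \<notin> K" "a \<notin> K" using bcT pa(2) KW by auto
    have "\<exists>B. K23m W F B"
    proof (rule K23m_intro5[of "{u}" W "insert a K0" "{b}" "{c}" "{s0}"])
      show "{u} \<subseteq> W" "insert a K0 \<subseteq> W" "{b} \<subseteq> W" "{c} \<subseteq> W" "{s0} \<subseteq> W"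
        using uW aN NuW K0K KW bcT TN qs by auto
      show "conn F {u}" "conn F {b}" "conn F {c}" "conn F {s0}" by auto
      show "conn F (insert a K0)"
        using conn_insert[OF K0(3) aK0 K0(2) edge_sym[OF pa(3)]] .
      show "{u} \<inter> insert a K0 = {}" using uNu aN KW K0K by auto
      show "{u} \<inter> {b} = {}" "{u} \<inter> {c} = {}" "{u} \<inter> {s0} = {}"
        using uNu bcT TN s0N by auto
      show "insert a K0 \<inter> {b} = {}" "insert a K0 \<inter> {c} = {}"
        using bcT bK K0K by auto
      show "insert a K0 \<inter> {s0} = {}" using qs bK by auto
      show "{b} \<inter> {c} = {}" "{b} \<inter> {s0} = {}" "{c} \<inter> {s0} = {}"
        using bc bK qs by auto
      show "adjs F {u} {b}" "adjs F {u} {c}" "adjs F {u} {s0}"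
        using eu(1) bcT TN s0N by (auto simp: adjs_single)
      show "adjs F (insert a K0) {b}" "adjs F (insert a K0) {c}"
        using ab by (auto simp: adjs_def)
      show "adjs F (insert a K0) {s0}" using qs unfolding adjs_def by blast
    qed
    then show False using nm by blast
  qed
qed



lemma LD:
  "simple_graph W F \<Longrightarrow> W \<noteq> {} \<Longrightarrow> \<not> (\<exists>B. K23m W F B) \<Longrightarrow> card F + 2 \<le> 2 * card W"
proof (induction "card W" arbitrary: W F rule: less_induct)
  case less
  note s = less.prems(1) and ne = less.prems(2) and nm = less.prems(3)
  have fW: "finite W" using s unfolding simple_graph_def by simp
  have cW: "1 \<le> card W" using fW ne by (simp add: Suc_le_eq card_gt_0_iff)
  show ?case
  proof (cases "card W = 1")
    case True
    then obtain x where W: "W = {x}" by (metis card_1_singletonE)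
    have "F = {}"
    proof (rule ccontr)
      assume "F \<noteq> {}"
      then obtain e where "e \<in> F" by blast
      then obtain p q where "p \<noteq> q" "e = {p, q}" using edge_form[OF s] by blast
      moreover have "p \<in> W" "q \<in> W" using edge_in[OF s] \<open>e \<in> F\<close> calculation by auto
      ultimately show False using W by auto
    qed
    then show ?thesis using True by simp
  next
    case False
    then have c2: "2 \<le> card W" using cW by simp
    show ?thesis
    proof (cases "\<exists>x\<in>W. card (nb F x) \<le> 2")
      case True
      then obtain x where x: "x \<in> W" "card (nb F x) \<le> 2" by blast
      let ?W = "W - {x}" and ?F = "{e \<in> F. x \<notin> e}"
      have cW': "card ?W = card W - 1" using x fW by simp
      have s': "simple_graph ?W ?F" using simple_del[OF s] .
      have ne': "?W \<noteq> {}" using c2 cW' by (metis One_nat_def card.empty diff_is_0_eq not_less_eq_eq numeral_2_eq_2)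
      have nm': "\<not> (\<exists>B. K23m ?W ?F B)" using nm K23m_mono[of ?W ?F _ W F] by blast
      have "card ?F + 2 \<le> 2 * card ?W" using less.hyps[OF _ s' ne' nm'] cW' c2 by simp
      moreover have "card F = card ?F + card (nb F x)" using card_del[OF s] .
      ultimately show ?thesis using x cW' c2 by simp
    next
      case deg: False
      show ?thesis
      proof (cases "\<exists>u w. {u, w} \<in> F \<and> card (nb F u \<inter> nb F w) \<le> 1")
        case True
        then obtain u w where uw: "{u, w} \<in> F" "card (nb F u \<inter> nb F w) \<le> 1" by blast
        have uwW: "u \<in> W" "w \<in> W" "u \<noteq> w" using edge_in[OF s uw(1)] by auto
        let ?W = "W - {w}" and ?F = "snd (contract_edge u w (W, F))"
        have cW': "card ?W = card W - 1" using uwW fW by simp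
        have s': "simple_graph ?W ?F" using simple_contract[OF s uwW(1) uwW(3)] .
        have ne': "?W \<noteq> {}" using c2 cW' by (metis One_nat_def card.empty diff_is_0_eq not_less_eq_eq numeral_2_eq_2)
        have nm': "\<not> (\<exists>B. K23m ?W ?F B)"
        proof
          assume "\<exists>B. K23m ?W ?F B"
          then obtain B where B: "K23m ?W ?F B" by blast
          have "\<forall>x\<in>nb F w. {w, x} \<in> F" unfolding nb_def by simp
          from K23m_lift[OF B _ _ uwW(2) uw(1) this contract_sub[OF s]]
          have "K23m W F (\<lambda>i. if u \<in> B i then insert w (B i) else B i)" by auto
          then show False using nm by blast
        qed
        have "card ?F + 2 \<le> 2 * card ?W" using less.hyps[OF _ s' ne' nm'] cW' c2 by simp
        moreover have "card F \<le> card ?F + 1 + card (nb F u \<inter> nb F w)" using card_contract[OF s uw(1)] .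
        ultimately show ?thesis using uw(2) cW' c2 by simp
      next
        case com: False
        show ?thesis
        proof (cases "hassep W F")
          case True
          then obtain W1 W2 where sp: "W1 \<union> W2 = W" "card (W1 \<inter> W2) \<le> 1" "W1 - W2 \<noteq> {}" "W2 - W1 \<noteq> {}"
            "\<forall>x\<in>W1 - W2. \<forall>y\<in>W2 - W1. {x, y} \<notin> F" unfolding hassep_def by blast
          let ?F1 = "{e \<in> F. e \<subseteq> W1}" and ?F2 = "{e \<in> F. e \<subseteq> W2}"
          have fin: "finite W1" "finite W2" using fW sp(1) by (metis finite_Un)+
          have lt: "card W1 < card W" "card W2 < card W"
            using sp fW by (metis Diff_eq_empty_iff Un_upper1 Un_upper2 psubsetI psubset_card_mono)+
          have s1: "simple_graph W1 ?F1" "simple_graph W2 ?F2" using simple_sub[OF s] sp(1) by auto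
          have ne1: "W1 \<noteq> {}" "W2 \<noteq> {}" using sp by auto
          have nm1: "\<not> (\<exists>B. K23m W1 ?F1 B)" "\<not> (\<exists>B. K23m W2 ?F2 B)"
            using nm K23m_mono[of W1 ?F1 _ W F] K23m_mono[of W2 ?F2 _ W F] sp(1) by blast+
          have h1: "card ?F1 + 2 \<le> 2 * card W1" using less.hyps[OF lt(1) s1(1) ne1(1) nm1(1)] .
          have h2: "card ?F2 + 2 \<le> 2 * card W2" using less.hyps[OF lt(2) s1(2) ne1(2) nm1(2)] .
          have "card F = card ?F1 + card ?F2" using split_count[OF s sp(1,2,5)] .
          moreover have "card W1 + card W2 = card W + card (W1 \<inter> W2)"
            using card_Un_Int[OF fin] sp(1) by simp
          ultimately show ?thesis using h1 h2 sp(2) by simp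
        next
          case ns: False
          have com': "\<forall>u w. {u, w} \<in> F \<longrightarrow> 2 \<le> card (nb F u \<inter> nb F w)"
          proof (intro allI impI)
            fix u w assume "{u, w} \<in> F"
            then have "\<not> card (nb F u \<inter> nb F w) \<le> 1" using com by blast
            then show "2 \<le> card (nb F u \<inter> nb F w)" by simp
          qed
          have d3: "card (nb F x) = 3" if "x \<in> W" for x
            using LD_final[OF s nm com' ns that] deg that by force
          have "(\<Sum>x\<in>W. card (nb F x)) = 3 * card W" using d3 by simp
          then have hs: "2 * card F = 3 * card W" using handshake[OF s] by simp
          obtain x where x: "x \<in> W" using ne by blast
          have "insert x (nb F x) \<subseteq> W" using x nb_sub[OF s] by auto
          then have "card (insert x (nb F x)) \<le> card W" using fW by (simp add: card_mono)
          moreover have "card (insert x (nb F x)) = 4"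
            using d3[OF x] nb_irrefl[OF s] finite_nb[OF s] by simp
          ultimately have "4 \<le> card W" by simp
          then show ?thesis using hs by simp
        qed
      qed
    qed
  qed
qed



lemma K33_sing:
  assumes "p0 \<in> W" "p1 \<in> W" "p2 \<in> W" "q3 \<in> W" "q4 \<in> W" "q5 \<in> W"
    and "p0 \<noteq> p1" "p0 \<noteq> p2" "p0 \<noteq> q3" "p0 \<noteq> q4" "p0 \<noteq> q5"
      "p1 \<noteq> p2" "p1 \<noteq> q3" "p1 \<noteq> q4" "p1 \<noteq> q5"
      "p2 \<noteq> q3" "p2 \<noteq> q4" "p2 \<noteq> q5" "q3 \<noteq> q4" "q3 \<noteq> q5" "q4 \<noteq> q5"
    and "{p0, q3} \<in> F" "{p0, q4} \<in> F" "{p0, q5} \<in> F" "{p1, q3} \<in> F" "{p1, q4} \<in> F" "{p1, q5} \<in> F"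
      "{p2, q3} \<in> F" "{p2, q4} \<in> F" "{p2, q5} \<in> F"
  shows "\<exists>B. K33m W F B"
  by (rule K33m_intro6[of "{p0}" W "{p1}" "{p2}" "{q3}" "{q4}" "{q5}"]) (use assms in \<open>simp_all add: adjs_single\<close>)

lemma apex:
  assumes K: "K23m W F B" and FE: "F \<subseteq> E" and WV: "W \<subseteq> V" and vV: "v \<in> V"
    and vB: "\<forall>i<5. v \<notin> B i" and vadj: "\<forall>j. 2 \<le> j \<longrightarrow> j < 5 \<longrightarrow> (\<exists>x\<in>B j. {v, x} \<in> E)"
  shows "\<exists>B'. K33m V E B'"
proof (rule K33m_intro6[of "B 0" V "B 1" "{v}" "B 2" "B 3" "B 4"])
  have sub: "B i \<subseteq> V" if "i < 5" for i using K23m_sub[OF K that] WV by auto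
  show "B 0 \<subseteq> V" "B 1 \<subseteq> V" "{v} \<subseteq> V" "B 2 \<subseteq> V" "B 3 \<subseteq> V" "B 4 \<subseteq> V"
    using sub vV by auto
  have cn: "conn E (B i)" if "i < 5" for i using conn_mono[OF K23m_conn[OF K that] FE] .
  show "conn E (B 0)" "conn E (B 1)" "conn E {v}" "conn E (B 2)" "conn E (B 3)" "conn E (B 4)"
    using cn by auto
  have d: "B i \<inter> B j = {}" if "i < 5" "j < 5" "i \<noteq> j" for i j using K23m_disj[OF K that] .
  show "B 0 \<inter> B 1 = {}" "B 0 \<inter> {v} = {}" "B 0 \<inter> B 2 = {}" "B 0 \<inter> B 3 = {}" "B 0 \<inter> B 4 = {}"
    "B 1 \<inter> {v} = {}" "B 1 \<inter> B 2 = {}" "B 1 \<inter> B 3 = {}" "B 1 \<inter> B 4 = {}"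
    "{v} \<inter> B 2 = {}" "{v} \<inter> B 3 = {}" "{v} \<inter> B 4 = {}"
    "B 2 \<inter> B 3 = {}" "B 2 \<inter> B 4 = {}" "B 3 \<inter> B 4 = {}"
    using d vB by auto
  have a: "adjs E (B i) (B j)" if "i < 2" "2 \<le> j" "j < 5" for i j
    using K23m_adj[OF K that] FE unfolding adjs_def by blast
  show "adjs E (B 0) (B 2)" "adjs E (B 0) (B 3)" "adjs E (B 0) (B 4)"
    "adjs E (B 1) (B 2)" "adjs E (B 1) (B 3)" "adjs E (B 1) (B 4)" using a by auto
  have va: "adjs E {v} (B j)" if "2 \<le> j" "j < 5" for j
    using vadj that unfolding adjs_def by blast
  show "adjs E {v} (B 2)" "adjs E {v} (B 3)" "adjs E {v} (B 4)" using va by auto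
qed



lemma A1:
  fixes d rr P Es :: nat
  assumes "7 \<le> d" "3 \<le> rr" "P + 4 \<le> 4 * d" "Es \<le> 2 * rr"
  shows "d * d + (d + P + Es) \<le> (d + 1 + rr + 2) * d"
proof -
  obtain a b where ab: "d = a + 7" "rr = b + 3" using assms(1,2) by (metis add.commute le_Suc_ex)
  have "d + P + Es \<le> 3 * d + rr * d" using assms unfolding ab by (simp add: algebra_simps)
  then show ?thesis by (simp add: algebra_simps)
qed

lemma A2:
  fixes d rr P Es M :: nat
  assumes "7 \<le> d" "3 \<le> rr" "3 \<le> M" "M + 2 \<le> d" "P + 2 * M \<le> 4 * d + 2" "Es \<le> rr * M"
  shows "d * d + (d + P + Es) \<le> (d + 1 + rr + 2) * d"
proof -
  obtain a b c where ab: "d = M + 2 + a" "rr = b + 3" using assms by (metis add.commute le_Suc_ex)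
  have "Es \<le> rr * M" by fact
  have "d + P + Es \<le> 3 * d + rr * d" using assms unfolding ab by (simp add: algebra_simps)
  then show ?thesis by (simp add: algebra_simps)
qed

lemma A3:
  fixes d rr P Es M :: nat
  assumes "7 \<le> d" "3 \<le> rr" "d \<le> M + 1" "M \<le> d" "P + 2 * M \<le> 4 * d + 2"
    "Es \<le> M + (rr - 1) * (2 + d - M)"
  shows "d * d + (d + P + Es) \<le> (d + 1 + rr + 2) * d"
proof -
  obtain b where b: "rr = b + 3" using assms by (metis add.commute le_Suc_ex)
  have "d = M \<or> d = M + 1" using assms by auto
  then have "d + P + Es \<le> 3 * d + rr * d"
  proof
    assume h: "d = M"
    obtain a where a: "M = a + 7" using assms h by (metis add.commute le_Suc_ex)
    show ?thesis using assms h unfolding a b by (simp add: algebra_simps)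
  next
    assume h: "d = M + 1"
    obtain a where a: "M = a + 6" using assms h by (metis add.commute le_Suc_ex add_le_cancel_right numeral_plus_one semiring_norm(5))
    show ?thesis using assms h unfolding a b by (simp add: algebra_simps)
  qed
  then show ?thesis by (simp add: algebra_simps)
qed


lemma sum_le_cm: "(\<And>i. i \<in> A \<Longrightarrow> f i \<le> K) \<Longrightarrow> sum f A \<le> card A * (K::nat)"
  using sum_bounded_above[of A f K] by simp

lemma local_bound:
  assumes s: "simple_graph V E" and free: "K33_minor_free V E" and vV: "v \<in> V"
    and Dl: "\<forall>x\<in>V. card (nb E x) + 4 \<le> card V"
  shows "card (nb E v) * card (nb E v) + (\<Sum>u\<in>nb E v. card (nb E u)) \<le> (card V + 2) * card (nb E v)"
proof -
  define N where "N = nb E v"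
  define d where "d = card N"
  define n where "n = card V"
  have fV: "finite V" using s unfolding simple_graph_def by simp
  have NV: "N \<subseteq> V" unfolding N_def using nb_sub[OF s] .
  have vN: "v \<notin> N" unfolding N_def using nb_irrefl[OF s] .
  have fN: "finite N" using NV fV finite_subset by blast
  have noK33: "\<not> (\<exists>B. K33m V E B)" using K33m_not_free[OF s] free by blast
  have dn: "d + 4 \<le> n" using Dl vV unfolding d_def n_def N_def by blast
  have goal: "d * d + (\<Sum>u\<in>N. card (nb E u)) \<le> (n + 2) * d"
  proof (cases "d \<le> 6")
    case True
    have "(\<Sum>u\<in>N. card (nb E u)) \<le> card N * (n - 4)"
    proof (rule sum_le_cm)
      fix u assume "u \<in> N"
      then have "card (nb E u) + 4 \<le> n" using Dl NV unfolding n_def by blast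
      then show "card (nb E u) \<le> n - 4" by simp
    qed
    then have "(\<Sum>u\<in>N. card (nb E u)) \<le> d * (n - 4)" unfolding d_def by simp
    moreover have "d * d \<le> d * 6" using True by simp
    moreover have "d * (n - 4) + d * 6 = (n + 2) * d" using dn by (simp add: algebra_simps)
    ultimately show ?thesis by linarith
  next
    case False
    then have d7: "7 \<le> d" by simp
    define R where "R = V - N - {v}"
    define rr where "rr = card R"
    have fR: "finite R" unfolding R_def using fV by simp
    have RV: "R \<subseteq> V" "v \<notin> R" "R \<inter> N = {}" unfolding R_def by auto
    have Vdec: "V = insert v (N \<union> R)" unfolding R_def using vV NV by auto
    have nrr: "n = d + 1 + rr"
    proof -
      have "card V = card (insert v (N \<union> R))" using Vdec by simp
      also have "\<dots> = 1 + card (N \<union> R)" using fN fR vN RV by simp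
      also have "\<dots> = 1 + d + rr" unfolding d_def rr_def using fN fR RV(3)
        by (simp add: card_Un_disjoint Int_commute)
      finally show ?thesis unfolding n_def by simp
    qed
    have rr3: "3 \<le> rr" using dn nrr by simp
    have nbu: "card (nb E u) = 1 + card (nb E u \<inter> N) + card (nb E u \<inter> R)" if uN: "u \<in> N" for u
    proof -
      have vu: "v \<in> nb E u" using uN nb_sym unfolding N_def by metis
      define X1 where "X1 = nb E u \<inter> N"
      define X2 where "X2 = nb E u \<inter> R"
      have eq: "nb E u = insert v (X1 \<union> X2)"
        unfolding X1_def X2_def using nb_sub[OF s, of u] Vdec vu by auto
      have f1: "finite X1" "finite X2" unfolding X1_def X2_def using fN fR by auto
      have vX: "v \<notin> X1 \<union> X2" unfolding X1_def X2_def using vN RV by auto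
      have dX: "X1 \<inter> X2 = {}" unfolding X1_def X2_def using RV by auto
      have "card (insert v (X1 \<union> X2)) = Suc (card (X1 \<union> X2))"
        using f1 vX by (simp add: card_insert_disjoint)
      moreover have "card (X1 \<union> X2) = card X1 + card X2" using card_Un_disjoint[OF f1 dX] .
      ultimately have "card (nb E u) = Suc (card X1 + card X2)" using eq by simp
      then show ?thesis unfolding X1_def X2_def by simp
    qed
    define FH where "FH = {e \<in> E. e \<subseteq> N}"
    have sH: "simple_graph N FH" unfolding FH_def using simple_sub[OF s NV] .
    have Psum: "(\<Sum>u\<in>N. card (nb E u \<inter> N)) = 2 * card FH"
    proof -
      have "(\<Sum>u\<in>N. card (nb E u \<inter> N)) = (\<Sum>u\<in>N. card (nb FH u))"
        unfolding FH_def by (rule sum.cong) (simp_all add: nb_sub_graph)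
      then show ?thesis using handshake[OF sH] by simp
    qed
    define A where "A r = nb E r \<inter> N" for r
    have Esum: "(\<Sum>u\<in>N. card (nb E u \<inter> R)) = (\<Sum>r\<in>R. card (A r))"
    proof -
      have "(\<Sum>u\<in>N. card (nb E u \<inter> R)) = (\<Sum>u\<in>N. \<Sum>r\<in>R. if r \<in> nb E u then 1 else 0)"
        by (rule sum.cong) (simp_all add: fR sum.inter_filter[symmetric] Int_def conj_commute)
      also have "\<dots> = (\<Sum>r\<in>R. \<Sum>u\<in>N. if r \<in> nb E u then 1 else 0)" by (rule sum.swap)
      also have "\<dots> = (\<Sum>r\<in>R. card (A r))"
      proof (rule sum.cong)
        fix r assume "r \<in> R"
        have "(\<Sum>u\<in>N. if r \<in> nb E u then 1 else 0) = (\<Sum>u\<in>N. if u \<in> nb E r then 1 else (0::nat))"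
          using nb_sym by metis
        also have "\<dots> = card {u \<in> N. u \<in> nb E r}" using fN by (simp add: sum.inter_filter[symmetric])
        also have "{u \<in> N. u \<in> nb E r} = A r" unfolding A_def by auto
        finally show "(\<Sum>u\<in>N. if r \<in> nb E u then 1 else 0) = card (A r)" .
      qed simp
      finally show ?thesis .
    qed
    have Sdec: "(\<Sum>u\<in>N. card (nb E u)) = d + 2 * card FH + (\<Sum>r\<in>R. card (A r))"
    proof -
      have "(\<Sum>u\<in>N. card (nb E u)) = (\<Sum>u\<in>N. 1 + card (nb E u \<inter> N) + card (nb E u \<inter> R))"
        by (rule sum.cong) (simp_all add: nbu)
      also have "\<dots> = d + (\<Sum>u\<in>N. card (nb E u \<inter> N)) + (\<Sum>u\<in>N. card (nb E u \<inter> R))"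
        unfolding d_def sum.distrib by simp
      finally show ?thesis using Psum Esum by simp
    qed
    have Nne: "N \<noteq> {}" using d7 unfolding d_def by auto
    have vadjN: "{v, x} \<in> E" if "x \<in> N" for x using that unfolding N_def nb_iff .
    have noK23: "\<not> (\<exists>B. K23m N FH B)"
    proof
      assume "\<exists>B. K23m N FH B"
      then obtain B where B: "K23m N FH B" by blast
      have "\<exists>B'. K33m V E B'"
      proof (rule apex[OF B _ NV vV])
        show "FH \<subseteq> E" unfolding FH_def by auto
        show "\<forall>i<5. v \<notin> B i" using K23m_sub[OF B] vN by blast
        show "\<forall>j. 2 \<le> j \<longrightarrow> j < 5 \<longrightarrow> (\<exists>x\<in>B j. {v, x} \<in> E)"
        proof (intro allI impI)
          fix j :: nat assume "2 \<le> j" "j < 5"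
          then have "B j \<noteq> {}" "B j \<subseteq> N" using K23m_conn[OF B] K23m_sub[OF B] unfolding conn_def by auto
          then show "\<exists>x\<in>B j. {v, x} \<in> E" using vadjN by blast
        qed
      qed
      then show False using noK33 by blast
    qed
    have LD1: "card FH + 2 \<le> 2 * d" using LD[OF sH Nne noK23] unfolding d_def .
    define M where "M = Max ((\<lambda>r. card (A r)) ` R)"
    have Rne: "R \<noteq> {}" using rr3 unfolding rr_def by auto
    have AM: "card (A r) \<le> M" if "r \<in> R" for r unfolding M_def using fR that by simp
    have "M \<in> (\<lambda>r. card (A r)) ` R" unfolding M_def using fR Rne by (intro Max_in) auto
    then obtain r0 where r0: "r0 \<in> R" "card (A r0) = M" by blast
    have AN: "A r \<subseteq> N" for r unfolding A_def by auto
    have Md: "M \<le> d" using r0 AN card_mono[OF fN] unfolding d_def by metis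
    have EsM: "(\<Sum>r\<in>R. card (A r)) \<le> rr * M"
      using sum_le_cm[of R "\<lambda>r. card (A r)" M] AM unfolding rr_def by simp
    have r0V: "r0 \<in> V" "r0 \<noteq> v" "r0 \<notin> N" using r0 RV by auto
    have rA: "{r0, x} \<in> E" if "x \<in> A r0" for x using that unfolding A_def by (simp add: nb_iff)
    have cFH: "card FH + M \<le> 2 * d + 1" if M3: "3 \<le> M"
    proof -
      let ?A0 = "A r0"
      have "?A0 \<noteq> {}" using M3 r0 by auto
      then obtain a where aA: "a \<in> ?A0" by blast
      have aN: "a \<in> N" using aA AN by auto
      have c2: "card (nb E a \<inter> ?A0) \<le> 2"
      proof (rule ccontr)
        assume "\<not> card (nb E a \<inter> ?A0) \<le> 2"
        then obtain x y z where xyz: "x \<in> nb E a \<inter> ?A0" "y \<in> nb E a \<inter> ?A0" "z \<in> nb E a \<inter> ?A0"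
          "x \<noteq> y" "x \<noteq> z" "y \<noteq> z" using card_ge3[of "nb E a \<inter> ?A0"] by auto
        have xN: "x \<in> N" "y \<in> N" "z \<in> N" using xyz AN by auto
        have ax: "{a, x} \<in> E" "{a, y} \<in> E" "{a, z} \<in> E" using xyz by (simp_all add: nb_iff)
        have ra: "{r0, x} \<in> E" "{r0, y} \<in> E" "{r0, z} \<in> E" using xyz rA by auto
        have an: "a \<noteq> x" "a \<noteq> y" "a \<noteq> z" using xyz nb_irrefl[OF s, of a] by auto
        have "\<exists>B. K33m V E B"
          by (rule K33_sing[of v V r0 a x y z])
            (use vV r0V aN NV xN xyz an vN ax ra vadjN in auto)
        then show False using noK33 by blast
      qed
      define F' where "F' = FH \<union> (\<lambda>x. {a, x}) ` (?A0 - {a})"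
      have sF': "simple_graph N F'"
        using sH aN AN unfolding F'_def simple_graph_def by auto
      have noK23': "\<not> (\<exists>B. K23m N F' B)"
      proof
        assume "\<exists>B. K23m N F' B"
        then obtain B where B: "K23m N F' B" by blast
        have ar: "{a, r0} \<in> E" using rA[OF aA] by (rule edge_sym)
        have F'sub: "F' \<subseteq> E \<union> {{a, x} | x. x \<in> ?A0}" unfolding F'_def FH_def by auto
        have L: "K23m V E (\<lambda>i. if a \<in> B i then insert r0 (B i) else B i)"
          using K23m_lift[OF B r0V(3) NV r0V(1) ar _ F'sub] rA by blast
        have "\<exists>B'. K33m V E B'"
        proof (rule apex[OF L _ subset_refl vV])
          show "E \<subseteq> E" by simp
          show "\<forall>i<5. v \<notin> (if a \<in> B i then insert r0 (B i) else B i)"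
            using K23m_sub[OF B] vN r0V(2) by auto
          show "\<forall>j. 2 \<le> j \<longrightarrow> j < 5 \<longrightarrow> (\<exists>x\<in>(if a \<in> B j then insert r0 (B j) else B j). {v, x} \<in> E)"
          proof (intro allI impI)
            fix j :: nat assume "2 \<le> j" "j < 5"
            then have "B j \<noteq> {}" "B j \<subseteq> N" using K23m_conn[OF B] K23m_sub[OF B] unfolding conn_def by auto
            then show "\<exists>x\<in>(if a \<in> B j then insert r0 (B j) else B j). {v, x} \<in> E" using vadjN by auto
          qed
        qed
        then show False using noK33 by blast
      qed
      have LD2: "card F' + 2 \<le> 2 * d" using LD[OF sF' Nne noK23'] unfolding d_def .
      define NE where "NE = (\<lambda>x. {a, x}) ` (?A0 - {a} - nb E a)"
      have NEF: "NE \<subseteq> F'" unfolding NE_def F'_def by auto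
      have NEd: "NE \<inter> FH = {}" unfolding NE_def FH_def by (auto simp: nb_iff)
      have finA0: "finite ?A0" using AN fN finite_subset by blast
      have injNE: "inj_on (\<lambda>x. {a, x}) (?A0 - {a} - nb E a)"
        by (rule inj_onI) (auto simp: doubleton_eq_iff)
      have cNE: "card NE = card (?A0 - {a} - nb E a)" unfolding NE_def using card_image[OF injNE] .
      have "?A0 \<subseteq> {a} \<union> (nb E a \<inter> ?A0) \<union> (?A0 - {a} - nb E a)" by auto
      then have "card ?A0 \<le> card ({a} \<union> (nb E a \<inter> ?A0) \<union> (?A0 - {a} - nb E a))"
        using finA0 by (intro card_mono) auto
      also have "\<dots> \<le> card ({a} \<union> (nb E a \<inter> ?A0)) + card (?A0 - {a} - nb E a)" by (rule card_Un_le)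
      also have "\<dots> \<le> 1 + card (nb E a \<inter> ?A0) + card (?A0 - {a} - nb E a)"
        using card_Un_le[of "{a}" "nb E a \<inter> ?A0"] by simp
      finally have "M \<le> 3 + card NE" using c2 cNE r0 by simp
      moreover have "card FH + card NE \<le> card F'"
      proof -
        have "finite F'" using finite_F[OF sF'] .
        then have "card (FH \<union> NE) \<le> card F'" using NEF unfolding F'_def by (intro card_mono) auto
        moreover have "card (FH \<union> NE) = card FH + card NE"
          using finite_F[OF sH] NEd finite_subset[OF NEF finite_F[OF sF']]
          by (simp add: card_Un_disjoint Int_commute)
        ultimately show ?thesis by simp
      qed
      ultimately show ?thesis using LD2 by simp
    qed
    have pair: "card (A r) + M \<le> 2 + d" if rR: "r \<in> R" and rne: "r \<noteq> r0" for r
    proof -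
      have c2: "card (A r \<inter> A r0) \<le> 2"
      proof (rule ccontr)
        assume "\<not> card (A r \<inter> A r0) \<le> 2"
        then obtain x y z where xyz: "x \<in> A r \<inter> A r0" "y \<in> A r \<inter> A r0" "z \<in> A r \<inter> A r0"
          "x \<noteq> y" "x \<noteq> z" "y \<noteq> z" using card_ge3[of "A r \<inter> A r0"] by auto
        have xN: "x \<in> N" "y \<in> N" "z \<in> N" using xyz AN by auto
        have rx: "{r, x} \<in> E" "{r, y} \<in> E" "{r, z} \<in> E" using xyz unfolding A_def by (simp_all add: nb_iff)
        have ra: "{r0, x} \<in> E" "{r0, y} \<in> E" "{r0, z} \<in> E" using xyz rA by auto
        have rV: "r \<in> V" "r \<noteq> v" "r \<notin> N" using rR RV by auto
        have "\<exists>B. K33m V E B"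
          by (rule K33_sing[of v V r0 r x y z])
            (use vV r0V rV rne NV xN xyz vN rx ra vadjN in auto)
        then show False using noK33 by blast
      qed
      have "A r \<subseteq> (A r \<inter> A r0) \<union> (N - A r0)" using AN by auto
      moreover have "finite (A r \<inter> A r0)" using finite_subset[OF AN fN] by simp
      ultimately have "card (A r) \<le> card ((A r \<inter> A r0) \<union> (N - A r0))" using fN by (intro card_mono) auto
      also have "\<dots> \<le> card (A r \<inter> A r0) + card (N - A r0)" by (rule card_Un_le)
      also have "card (N - A r0) = d - M" using card_Diff_subset[OF finite_subset[OF AN fN] AN] r0 unfolding d_def by simp
      finally show ?thesis using c2 Md by simp
    qed
    have S': "d * d + (\<Sum>u\<in>N. card (nb E u)) \<le> (d + 1 + rr + 2) * d"
    proof (cases "M \<le> 2")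
      case True
      have "(\<Sum>r\<in>R. card (A r)) \<le> 2 * rr" using EsM True
        by (metis le_trans mult.commute mult_le_mono2)
      then show ?thesis unfolding Sdec using A1[OF d7 rr3 _ ] LD1 by simp
    next
      case M3: False
      then have cF: "card FH + M \<le> 2 * d + 1" using cFH by simp
      show ?thesis
      proof (cases "M + 2 \<le> d")
        case True
        then show ?thesis unfolding Sdec using A2[OF d7 rr3 _ True _ EsM] M3 cF by simp
      next
        case False
        have Es2: "(\<Sum>r\<in>R. card (A r)) \<le> M + (rr - 1) * (2 + d - M)"
        proof -
          have "(\<Sum>r\<in>R. card (A r)) = card (A r0) + (\<Sum>r\<in>R - {r0}. card (A r))"
            using fR r0(1) by (simp add: sum.remove)
          moreover have "(\<Sum>r\<in>R - {r0}. card (A r)) \<le> card (R - {r0}) * (2 + d - M)"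
          proof (rule sum_le_cm)
            fix r assume "r \<in> R - {r0}"
            then have "card (A r) + M \<le> 2 + d" using pair by auto
            then show "card (A r) \<le> 2 + d - M" by simp
          qed
          moreover have "card (R - {r0}) = rr - 1" using fR r0(1) unfolding rr_def by simp
          ultimately show ?thesis using r0 by simp
        qed
        have "d \<le> M + 1" using False by simp
        then show ?thesis unfolding Sdec using A3[OF d7 rr3 _ Md _ Es2] cF by simp
      qed
    qed
    then show ?thesis using nrr by simp
  qed
  then show ?thesis unfolding N_def d_def n_def by (simp add: mult.commute)
qed



lemma mat_vec_entry:
  assumes "i < n" "dim_vec v = n"
  shows "(mat n n (\<lambda>(i, j). f i j) *\<^sub>v v) $ i = (\<Sum>j<n. f i j * v $ j)"
  using assms by (simp add: scalar_prod_def atLeast0LessThan)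

lemma real_eig_finite:
  fixes Q :: "nat \<Rightarrow> nat \<Rightarrow> real"
  shows "finite {a. \<exists>x. (\<exists>i<n. x i \<noteq> 0) \<and> (\<forall>i<n. (\<Sum>j<n. Q i j * x j) = a * x i)}"
proof -
  define A where "A = mat n n (\<lambda>(i, j). Q i j)"
  have A: "A \<in> carrier_mat n n" unfolding A_def by simp
  have "{a. \<exists>x. (\<exists>i<n. x i \<noteq> 0) \<and> (\<forall>i<n. (\<Sum>j<n. Q i j * x j) = a * x i)} \<subseteq> spectrum A"
  proof
    fix a assume "a \<in> {a. \<exists>x. (\<exists>i<n. x i \<noteq> 0) \<and> (\<forall>i<n. (\<Sum>j<n. Q i j * x j) = a * x i)}"
    then obtain x i0 where x: "i0 < n" "x i0 \<noteq> 0" "\<forall>i<n. (\<Sum>j<n. Q i j * x j) = a * x i" by blast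
    define v where "v = vec n x"
    have "eigenvector A v a" unfolding eigenvector_def
    proof (intro conjI)
      show "v \<in> carrier_vec (dim_row A)" unfolding v_def A_def by simp
      show "v \<noteq> 0\<^sub>v (dim_row A)"
      proof
        assume "v = 0\<^sub>v (dim_row A)"
        then have "v $ i0 = 0" using x(1) unfolding A_def by simp
        then show False using x unfolding v_def by simp
      qed
      show "A *\<^sub>v v = a \<cdot>\<^sub>v v"
      proof (rule eq_vecI)
        show "dim_vec (A *\<^sub>v v) = dim_vec (a \<cdot>\<^sub>v v)" unfolding A_def v_def by simp
        fix i assume "i < dim_vec (a \<cdot>\<^sub>v v)"
        then have i: "i < n" unfolding v_def by simp
        have "(A *\<^sub>v v) $ i = (\<Sum>j<n. Q i j * v $ j)"
          unfolding A_def using mat_vec_entry[OF i, of v] unfolding v_def by simp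
        also have "\<dots> = (\<Sum>j<n. Q i j * x j)" unfolding v_def by (rule sum.cong) auto
        also have "\<dots> = a * x i" using x(3) i by simp
        finally show "(A *\<^sub>v v) $ i = (a \<cdot>\<^sub>v v) $ i" unfolding v_def using i by simp
      qed
    qed
    then show "a \<in> spectrum A" unfolding spectrum_def eigenvalue_def by auto
  qed
  moreover have "finite (spectrum A)" using card_finite_spectrum(1)[OF A] .
  ultimately show ?thesis using finite_subset by blast
qed

lemma real_eig_exists:
  fixes Q :: "nat \<Rightarrow> nat \<Rightarrow> real"
  assumes sym: "\<And>i j. i < n \<Longrightarrow> j < n \<Longrightarrow> Q i j = Q j i" and n: "0 < n"
  shows "\<exists>a x. (\<exists>i<n. x i \<noteq> 0) \<and> (\<forall>i<n. (\<Sum>j<n. Q i j * x j) = a * x i)"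
proof -
  define A where "A = mat n n (\<lambda>(i, j). complex_of_real (Q i j))"
  have A: "A \<in> carrier_mat n n" unfolding A_def by simp
  obtain lam where "lam \<in> spectrum A" using spectrum_non_empty[OF A n] by blast
  then obtain z where z: "z \<in> carrier_vec n" "z \<noteq> 0\<^sub>v n" "A *\<^sub>v z = lam \<cdot>\<^sub>v z"
    unfolding spectrum_def eigenvalue_def eigenvector_def A_def by auto
  have dz: "dim_vec z = n" using z(1) by simp
  have ceq: "(\<Sum>j<n. complex_of_real (Q i j) * z $ j) = lam * z $ i" if i: "i < n" for i
  proof -
    have "(A *\<^sub>v z) $ i = (\<Sum>j<n. complex_of_real (Q i j) * z $ j)"
      unfolding A_def using mat_vec_entry[OF i dz] by simp
    then show ?thesis using z(3) i dz by simp
  qed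
  define p where "p j = Re (z $ j)" for j
  define q where "q j = Im (z $ j)" for j
  define a where "a = Re lam"
  define b where "b = Im lam"
  have pe: "(\<Sum>j<n. Q i j * p j) = a * p i - b * q i" if i: "i < n" for i
  proof -
    have "Re (\<Sum>j<n. complex_of_real (Q i j) * z $ j) = Re (lam * z $ i)" using ceq[OF i] by simp
    then show ?thesis unfolding p_def q_def a_def b_def by (simp add: Re_sum)
  qed
  have qe: "(\<Sum>j<n. Q i j * q j) = b * p i + a * q i" if i: "i < n" for i
  proof -
    have "Im (\<Sum>j<n. complex_of_real (Q i j) * z $ j) = Im (lam * z $ i)" using ceq[OF i] by simp
    then show ?thesis unfolding p_def q_def a_def b_def by (simp add: Im_sum algebra_simps)
  qed
  have symsum: "(\<Sum>i<n. p i * (\<Sum>j<n. Q i j * q j)) = (\<Sum>i<n. q i * (\<Sum>j<n. Q i j * p j))"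
  proof -
    have "(\<Sum>i<n. p i * (\<Sum>j<n. Q i j * q j)) = (\<Sum>i<n. \<Sum>j<n. Q i j * p i * q j)"
      by (simp add: sum_distrib_left algebra_simps)
    also have "\<dots> = (\<Sum>j<n. \<Sum>i<n. Q i j * p i * q j)" by (rule sum.swap)
    also have "\<dots> = (\<Sum>j<n. \<Sum>i<n. Q j i * p i * q j)"
      by (rule sum.cong, simp, rule sum.cong, simp, simp add: sym)
    also have "\<dots> = (\<Sum>i<n. q i * (\<Sum>j<n. Q i j * p j))"
      by (simp add: sum_distrib_left algebra_simps)
    finally show ?thesis .
  qed
  have "(\<Sum>i<n. p i * (b * p i + a * q i)) = (\<Sum>i<n. q i * (a * p i - b * q i))"
    using symsum pe qe by simp
  then have "b * (\<Sum>i<n. p i * p i + q i * q i) = 0"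
    by (simp add: sum_distrib_left algebra_simps sum_subtractf sum.distrib)
  moreover have "(\<Sum>i<n. p i * p i + q i * q i) > 0"
  proof -
    obtain i0 where i0: "i0 < n" "z $ i0 \<noteq> 0"
      using z(2) dz by (metis eq_vecI index_zero_vec(1) index_zero_vec(2))
    then have "p i0 \<noteq> 0 \<or> q i0 \<noteq> 0" unfolding p_def q_def using complex_eqI by fastforce
    then have "p i0 * p i0 + q i0 * q i0 > 0"
      using sum_power2_gt_zero_iff[of "p i0" "q i0"] by (simp add: power2_eq_square)
    moreover have "0 \<le> p i * p i + q i * q i" for i by (intro add_nonneg_nonneg) simp_all
    ultimately show ?thesis using i0(1)
      by (intro sum_pos2[of "{..<n}" i0]) auto
  qed
  ultimately have b0: "b = 0" by simp
  have pe': "\<forall>i<n. (\<Sum>j<n. Q i j * p j) = a * p i" using pe b0 by simp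
  have qe': "\<forall>i<n. (\<Sum>j<n. Q i j * q j) = a * q i" using qe b0 by simp
  obtain i0 where i0: "i0 < n" "z $ i0 \<noteq> 0"
    using z(2) dz by (metis eq_vecI index_zero_vec(1) index_zero_vec(2))
  then have "p i0 \<noteq> 0 \<or> q i0 \<noteq> 0" unfolding p_def q_def using complex_eqI by fastforce
  then show ?thesis using pe' qe' i0(1) by blast
qed



lemma eig_bound:
  fixes D :: "'a \<Rightarrow> real" and x :: "'a \<Rightarrow> real"
  assumes fV: "finite V"
    and NbV: "\<forall>v\<in>V. Nb v \<subseteq> V"
    and Dpos: "\<forall>v\<in>V. \<forall>u\<in>Nb v. D u > 0"
    and D0: "\<forall>v\<in>V. D v = 0 \<longrightarrow> Nb v = {}"
    and Dnn: "\<forall>v\<in>V. D v \<ge> 0"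
    and bnd: "\<forall>v\<in>V. D v > 0 \<longrightarrow> D v * D v + (\<Sum>u\<in>Nb v. D u) \<le> c * D v"
    and wV: "w \<in> V" and xw: "x w \<noteq> 0"
    and eq: "\<forall>v\<in>V. D v * x v + (\<Sum>u\<in>Nb v. x u) = mu * x v"
    and c0: "c \<ge> 0"
  shows "mu \<le> c"
proof -
  define U where "U = {v \<in> V. D v > 0}"
  show ?thesis
  proof (cases "\<forall>v\<in>U. x v = 0")
    case True
    then have "w \<notin> U" using xw by blast
    then have "D w = 0" using Dnn wV unfolding U_def by force
    moreover then have "Nb w = {}" using D0 wV by blast
    ultimately have "mu * x w = 0" using eq wV by force
    then have "mu = 0" using xw by simp
    then show ?thesis using c0 by simp
  next
    case False
    then obtain v1 where v1: "v1 \<in> U" "x v1 \<noteq> 0" by blast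
    define g where "g v = \<bar>x v\<bar> / D v" for v
    have fU: "finite U" unfolding U_def using fV by simp
    have Une: "U \<noteq> {}" using v1 by blast
    define G where "G = Max (g ` U)"
    have "G \<in> g ` U" unfolding G_def using fU Une by (intro Max_in) auto
    then obtain v0 where v0: "v0 \<in> U" "g v0 = G" by blast
    have gle: "g v \<le> G" if "v \<in> U" for v unfolding G_def using fU that by simp
    have "g v1 > 0" using v1 unfolding g_def U_def by simp
    then have Gp: "G > 0" using gle[OF v1(1)] by simp
    have v0V: "v0 \<in> V" and d0: "D v0 > 0" using v0 unfolding U_def by auto
    have xu: "\<bar>x u\<bar> \<le> G * D u" if "u \<in> Nb v0" for u
    proof -
      have uV: "u \<in> V" using NbV v0V that by blast
      have Du: "D u > 0" using Dpos v0V that by blast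
      then have "u \<in> U" using uV unfolding U_def by simp
      then have "\<bar>x u\<bar> / D u \<le> G" using gle unfolding g_def by simp
      then show ?thesis using Du by (simp add: divide_le_eq mult.commute)
    qed
    have xv0: "\<bar>x v0\<bar> = G * D v0" using v0(2) d0 unfolding g_def by (simp add: field_simps)
    have "\<bar>mu\<bar> * \<bar>x v0\<bar> = \<bar>D v0 * x v0 + (\<Sum>u\<in>Nb v0. x u)\<bar>"
      using eq v0V by (simp add: abs_mult)
    also have "\<dots> \<le> \<bar>D v0 * x v0\<bar> + \<bar>\<Sum>u\<in>Nb v0. x u\<bar>" by (rule abs_triangle_ineq)
    also have "\<dots> \<le> D v0 * \<bar>x v0\<bar> + (\<Sum>u\<in>Nb v0. \<bar>x u\<bar>)"
      using d0 by (simp add: abs_mult sum_abs)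
    also have "\<dots> \<le> D v0 * \<bar>x v0\<bar> + (\<Sum>u\<in>Nb v0. G * D u)"
      using xu by (simp add: sum_mono)
    also have "\<dots> = G * (D v0 * D v0 + (\<Sum>u\<in>Nb v0. D u))"
      using xv0 by (simp add: sum_distrib_left algebra_simps)
    also have "\<dots> \<le> G * (c * D v0)"
      using bnd v0V d0 Gp by (simp add: mult_left_mono)
    finally have "\<bar>mu\<bar> * (G * D v0) \<le> c * (G * D v0)" using xv0 by (simp add: algebra_simps)
    then have "\<bar>mu\<bar> \<le> c" using Gp d0 by (simp add: mult_le_cancel_right)
    then show ?thesis by simp
  qed
qed

definition Qv :: "'a set set \<Rightarrow> 'a \<Rightarrow> 'a \<Rightarrow> real" where
  "Qv E u w = (if u = w then real (Defs.degree E u) else if adj E u w then 1 else 0)"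

lemma adj_irrefl: "simple_graph V E \<Longrightarrow> \<not> adj E v v"
  unfolding simple_graph_def adj_def by force

lemma Qv_sym: "Qv E u w = Qv E w u"
  unfolding Qv_def adj_def by (simp add: insert_commute)

lemma row_eq:
  assumes s: "simple_graph V E" and vV: "v \<in> V"
  shows "real (Defs.degree E v) * x v + (\<Sum>u\<in>{u \<in> V. adj E v u}. x u) = (\<Sum>u\<in>V. Qv E v u * x u)"
proof -
  have fV: "finite V" using s unfolding simple_graph_def by simp
  have "(\<Sum>u\<in>V. Qv E v u * x u) = Qv E v v * x v + (\<Sum>u\<in>V - {v}. Qv E v u * x u)"
    using fV vV by (simp add: sum.remove)
  also have "(\<Sum>u\<in>V - {v}. Qv E v u * x u) = (\<Sum>u\<in>V - {v}. if adj E v u then x u else 0)"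
    by (rule sum.cong) (auto simp: Qv_def)
  also have "\<dots> = (\<Sum>u\<in>{u \<in> V - {v}. adj E v u}. x u)"
    by (rule sum.inter_filter[symmetric]) (use fV in simp)
  also have "{u \<in> V - {v}. adj E v u} = {u \<in> V. adj E v u}" using adj_irrefl[OF s, of v] by auto
  finally show ?thesis unfolding Qv_def by simp
qed

lemma eigset_eq:
  assumes s: "simple_graph V E" and bij: "bij_betw f {..<n} V"
  shows "{mu. signless_laplacian_eigenvalue V E mu} =
    {a. \<exists>x. (\<exists>i<n. x i \<noteq> 0) \<and> (\<forall>i<n. (\<Sum>j<n. Qv E (f i) (f j) * x j) = a * x i)}"
proof -
  have reidx: "(\<Sum>u\<in>V. h u) = (\<Sum>j<n. h (f j))" for h :: "'a \<Rightarrow> real"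
    using sum.reindex_bij_betw[OF bij, of h] by simp
  have fV: "f ` {..<n} = V" using bij by (simp add: bij_betw_def)
  define g where "g = the_inv_into {..<n} f"
  have inj: "inj_on f {..<n}" using bij by (simp add: bij_betw_def)
  have fg: "f (g u) = u" "g u < n" if "u \<in> V" for u
    using f_the_inv_into_f[OF inj, of u] the_inv_into_into[OF inj, of u "{..<n}"] that fV
    unfolding g_def by auto
  have gf: "g (f j) = j" if "j < n" for j using the_inv_into_f_f[OF inj] that unfolding g_def by simp
  have d1: "\<exists>y. (\<exists>i<n. y i \<noteq> 0) \<and> (\<forall>i<n. (\<Sum>j<n. Qv E (f i) (f j) * y j) = mu * y i)"
    if "signless_laplacian_eigenvalue V E mu" for mu
  proof -
    from that obtain x v where x: "v \<in> V" "x v \<noteq> 0"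
      "\<forall>v\<in>V. real (Defs.degree E v) * x v + (\<Sum>u\<in>{u \<in> V. adj E v u}. x u) = mu * x v"
      unfolding signless_laplacian_eigenvalue_def by blast
    show "\<exists>y. (\<exists>i<n. y i \<noteq> 0) \<and> (\<forall>i<n. (\<Sum>j<n. Qv E (f i) (f j) * y j) = mu * y i)"
    proof (rule exI[of _ "\<lambda>i. x (f i)"], intro conjI)
      show "\<exists>i<n. x (f i) \<noteq> 0" using x fg by metis
      show "\<forall>i<n. (\<Sum>j<n. Qv E (f i) (f j) * x (f j)) = mu * x (f i)"
      proof (intro allI impI)
        fix i assume i: "i < n"
        have fi: "f i \<in> V" using i fV by auto
        have "(\<Sum>j<n. Qv E (f i) (f j) * x (f j)) = (\<Sum>u\<in>V. Qv E (f i) u * x u)"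
          using reidx[of "\<lambda>u. Qv E (f i) u * x u"] by simp
        also have "\<dots> = mu * x (f i)" using row_eq[OF s fi, of x] x(3) fi by simp
        finally show "(\<Sum>j<n. Qv E (f i) (f j) * x (f j)) = mu * x (f i)" .
      qed
    qed
  qed
  have d2: "signless_laplacian_eigenvalue V E mu"
    if "\<exists>y. (\<exists>i<n. y i \<noteq> 0) \<and> (\<forall>i<n. (\<Sum>j<n. Qv E (f i) (f j) * y j) = mu * y i)" for mu
  proof -
    from that obtain y i0 where y: "i0 < n" "y i0 \<noteq> 0" "\<forall>i<n. (\<Sum>j<n. Qv E (f i) (f j) * y j) = mu * y i"
      by blast
    define x where "x u = y (g u)" for u
    show "signless_laplacian_eigenvalue V E mu" unfolding signless_laplacian_eigenvalue_def
    proof (rule exI[of _ x], intro conjI)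
      show "\<exists>v\<in>V. x v \<noteq> 0" using y gf fV unfolding x_def by (metis imageI lessThan_iff)
      show "\<forall>v\<in>V. real (Defs.degree E v) * x v + (\<Sum>u\<in>{u \<in> V. adj E v u}. x u) = mu * x v"
      proof
        fix v assume vV: "v \<in> V"
        have "real (Defs.degree E v) * x v + (\<Sum>u\<in>{u \<in> V. adj E v u}. x u) = (\<Sum>u\<in>V. Qv E v u * x u)"
          using row_eq[OF s vV] .
        also have "\<dots> = (\<Sum>j<n. Qv E v (f j) * x (f j))" using reidx by simp
        also have "\<dots> = (\<Sum>j<n. Qv E (f (g v)) (f j) * y j)"
          using fg[OF vV] gf unfolding x_def by simp
        also have "\<dots> = mu * y (g v)" using y(3)[rule_format, OF fg(2)[OF vV]] by simp
        finally show "real (Defs.degree E v) * x v + (\<Sum>u\<in>{u \<in> V. adj E v u}. x u) = mu * x v"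
          unfolding x_def .
      qed
    qed
  qed
  show ?thesis
  proof (rule Set.set_eqI)
    fix mu
    show "(mu \<in> {mu. signless_laplacian_eigenvalue V E mu}) =
      (mu \<in> {a. \<exists>x. (\<exists>i<n. x i \<noteq> 0) \<and> (\<forall>i<n. (\<Sum>j<n. Qv E (f i) (f j) * x j) = a * x i)})"
      using d1[of mu] d2[of mu] by blast
  qed
qed

lemma eigset_props:
  assumes s: "simple_graph V E" and ne: "V \<noteq> {}"
  shows "finite {mu. signless_laplacian_eigenvalue V E mu}" "{mu. signless_laplacian_eigenvalue V E mu} \<noteq> {}"
proof -
  have fV: "finite V" using s unfolding simple_graph_def by simp
  obtain f where f: "bij_betw f {0..<card V} V" using ex_bij_betw_nat_finite[OF fV] by blast
  then have bij: "bij_betw f {..<card V} V" by (simp add: atLeast0LessThan)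
  note eq = eigset_eq[OF s bij]
  show "finite {mu. signless_laplacian_eigenvalue V E mu}" unfolding eq by (rule real_eig_finite)
  have "0 < card V" using fV ne by (simp add: card_gt_0_iff)
  have "\<exists>a x. (\<exists>i<card V. x i \<noteq> 0) \<and> (\<forall>i<card V. (\<Sum>j<card V. Qv E (f i) (f j) * x j) = a * x i)"
    by (rule real_eig_exists) (simp_all add: Qv_sym \<open>0 < card V\<close>)
  then show "{mu. signless_laplacian_eigenvalue V E mu} \<noteq> {}" unfolding eq by auto
qed


theorem lemma4p1:
  fixes V :: "'a set" and E :: "'a set set"
  assumes "simple_graph V E"
    and "K33_minor_free V E"
    and "card V \<ge> 11"
    and "max_degree V E \<le> card V - 4"
  shows "q_index V E \<le> real (card V) + 2"
proof -
  note s = assms(1) and free = assms(2)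
  have fV: "finite V" using s unfolding simple_graph_def by simp
  have Vne: "V \<noteq> {}" using assms(3) by auto
  have degnb: "Defs.degree E v = card (nb E v)" for v
    unfolding Defs.degree_def using card_inc[OF s] .
  have adjnb: "{u \<in> V. adj E v u} = nb E v" for v
    using nb_sub[OF s, of v] unfolding adj_def nb_def by auto
  have Dl: "\<forall>x\<in>V. card (nb E x) + 4 \<le> card V"
  proof
    fix x assume xV: "x \<in> V"
    have "Defs.degree E x \<le> max_degree V E" unfolding max_degree_def using fV xV by simp
    then have "Defs.degree E x \<le> card V - 4" using assms(4) by simp
    then show "card (nb E x) + 4 \<le> card V" using degnb assms(3) by simp
  qed
  have bnd: "mu \<le> real (card V) + 2" if ev: "signless_laplacian_eigenvalue V E mu" for mu
  proof -
    obtain x w where xw: "w \<in> V" "x w \<noteq> 0"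
      "\<forall>v\<in>V. real (Defs.degree E v) * x v + (\<Sum>u\<in>{u \<in> V. adj E v u}. x u) = mu * x v"
      using ev unfolding signless_laplacian_eigenvalue_def by blast
    show ?thesis
    proof (rule eig_bound[of V "nb E" "\<lambda>v. real (card (nb E v))" _ w x mu])
      show "finite V" by (rule fV)
      show "\<forall>v\<in>V. nb E v \<subseteq> V" using nb_sub[OF s] by blast
      show "\<forall>v\<in>V. \<forall>u\<in>nb E v. 0 < real (card (nb E u))"
      proof (intro ballI)
        fix v u assume "v \<in> V" "u \<in> nb E v"
        then have "v \<in> nb E u" using nb_sym by metis
        then have "card (nb E u) > 0" using finite_nb[OF s] card_gt_0_iff by blast
        then show "0 < real (card (nb E u))" by simp
      qed
      show "\<forall>v\<in>V. real (card (nb E v)) = 0 \<longrightarrow> nb E v = {}" using finite_nb[OF s] by simp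
      show "\<forall>v\<in>V. 0 \<le> real (card (nb E v))" by simp
      show "\<forall>v\<in>V. 0 < real (card (nb E v)) \<longrightarrow>
          real (card (nb E v)) * real (card (nb E v)) + (\<Sum>u\<in>nb E v. real (card (nb E u)))
          \<le> (real (card V) + 2) * real (card (nb E v))"
      proof (intro ballI impI)
        fix v assume vV: "v \<in> V"
        have h: "card (nb E v) * card (nb E v) + (\<Sum>u\<in>nb E v. card (nb E u)) \<le> (card V + 2) * card (nb E v)"
          using local_bound[OF s free vV Dl] .
        have "real (card (nb E v) * card (nb E v) + (\<Sum>u\<in>nb E v. card (nb E u))) \<le> real ((card V + 2) * card (nb E v))"
          using h by (simp only: of_nat_le_iff)
        then show "real (card (nb E v)) * real (card (nb E v)) + (\<Sum>u\<in>nb E v. real (card (nb E u)))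
          \<le> (real (card V) + 2) * real (card (nb E v))" by (simp add: algebra_simps)
      qed
      show "w \<in> V" "x w \<noteq> 0" using xw by auto
      show "\<forall>v\<in>V. real (card (nb E v)) * x v + (\<Sum>u\<in>nb E v. x u) = mu * x v"
        using xw(3) degnb adjnb by simp
      show "0 \<le> real (card V) + 2" by simp
    qed
  qed
  have fin: "finite {mu. signless_laplacian_eigenvalue V E mu}"
    and ne: "{mu. signless_laplacian_eigenvalue V E mu} \<noteq> {}"
    using eigset_props[OF s Vne] by auto
  show ?thesis unfolding q_index_def using fin ne bnd by (simp add: Max_le_iff)
qed

end
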